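(* Let $\mathcal M=(Q,s_{in},s_T,s_F,\delta)$ be a Turing machine with input that never moves its input head outside the input tape. There is a closed term ${\tt trans}_{\mathcal M}$ and a constant $c$ such that for every term $k$ and every configuration $C$ with input tape string $i$: (1) if a final configuration $D$ is reachable from $C$ in $n$ transition steps, then ${\tt trans}_{\mathcal M}\,k\,\ulcorner C\urcorner\to_{det}^{m} k\,\ulcorner D\urcorner$ for some $m\le c\,(n+1)\,|i|\log_2|i|$; (2) if no final configuration is reachable from $C$, then ${\tt trans}_{\mathcal M}\,k\,\ulcorner C\urcorner$ diverges, i.e. it admits an infinite $\to_{det}$ reduction sequence.
   Context: Deterministic $\lambda$-calculus $\Lambda_{\tt det}$: terms $t ::= v \mid t\,v$, values $v ::= x\mid \lambda x.t$, evaluation contexts $E ::= [\cdot]\mid E\,v$, and $E[(\lambda x.t)v]\to_{det} E[t\{x:=v\}]$; $\to_{det}^m$ means exactly $m$ steps. Encodings: a character $a_j$ of an ordered alphabet $\Sigma=\{a_1<\dots<a_p\}$ is $\ulcorner a_j\urcorner:=\lambda x_1\ldots\lambda x_p.x_j$; strings over $\Sigma$ are $\ulcorner\varepsilon\urcorner:=\lambda x_1\ldots\lambda x_p.\lambda x_\varepsilon.x_\varepsilon$, $\ulcorner a_j r\urcorner:=\lambda x_1\ldots\lambda x_p.\lambda x_\varepsilon.x_j\ulcorner r\urcorner$. Reversed binary: $\mathrm{bin}(0)=\varepsilon$, for $n>0$ $\mathrm{bin}(n)=b_0\cdots b_\ell$ with $n=\sum_j b_j 2^j$, $b_\ell=1$,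 encoded as a string over $\{0<1\}$. Turing machines with input: $\mathbb B_I=\{0<1<\mathsf L<\mathsf R\}$, $\mathbb B_W=\{0<1<\Box\}$ ($\Box$ blank). A machine is $\mathcal M=(Q,s_{in},s_T,s_F,\delta)$ with finite ordered set of states $Q=\{s_1<\dots<s_m\}$, initial state $s_{in}$, final states $s_T,s_F$, and partial transition function $\delta:\mathbb B_I\times\mathbb B_W\times Q\rightharpoonup\{-1,+1,0\}\times\mathbb B_W\times\{\leftarrow,\rightarrow,\downarrow\}\times Q$, defined on $(b,a,s)$ only if $s\notin\{s_T,s_F\}$. A configuration is $(i,n\mid w_l,a,w_r\mid s)$ with $i=\mathsf L s'\mathsf R$, $s'\in\{0,1\}^*$, the read-only input tape string, $n\in\mathbb N$ the input-head position, $w_l,w_r\in\mathbb B_W^*$ the work tape to the left/right of the work head, $a\in\mathbb B_W$ the work-head cell, $s\in Q$; it is final if $s\in\{s_T,s_F\}$ (final configurations do not evolve). Transition: let $b$ be the character of $i$ at position $n$ (counting from $0$) and $\delta(b,a,s)=(d\mid a',\mu\mid s')$. Then $C\to_{\mathcal M} D$ where $D$ has input position $n+d$, state $s'$, and work part: if $\mu=\downarrow$, $(w_l,a',w_r)$; if $\mu=\leftarrow$ and $w_l=w a''$, $(w,a'',a'w_r)$, and if $w_l=\varepsilon$, $(\varepsilon,\Box,a'w_r)$; if $\mu=\rightarrow$ and $w_r=a''w$, $(w_l a',a'',w)$, and if $w_r=\varepsilon$, $(w_la',\Box,\varepsilon)$. The input string $i$ is unchanged. The encoding of a configuration is $\ulcorner(i,n\mid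 w_l,a,w_r\mid s)\urcorner:=\lambda x.\,x\,\ulcorner i\urcorner\,\ulcorner\mathrm{bin}(n)\urcorner\,\ulcorner w_l^{R}\urcorner\,\ulcorner a\urcorner\,\ulcorner w_r\urcorner\,\ulcorner s\urcorner$, with $i$ encoded as a string over $\mathbb B_I$, $w_l^R$ (reversal of $w_l$) and $w_r$ as strings over $\mathbb B_W$, $a$ as a character of $\mathbb B_W$, $s$ as a character of $Q$. Note $|i|\ge 2$. *)

theory Defs
  imports Complex_Main
begin

datatype dterm = Var nat | Lam dterm | App dterm dterm

fun lift :: "nat \<Rightarrow> dterm \<Rightarrow> dterm" where
  "lift k (Var i) = (if i < k then Var i else Var (Suc i))"
| "lift k (Lam t) = Lam (lift (Suc k) t)"
| "lift k (App t u) = App (lift k t) (lift k u)"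

fun subst :: "dterm \<Rightarrow> nat \<Rightarrow> dterm \<Rightarrow> dterm" where
  "subst (Var i) k s = (if i < k then Var i else if i = k then s else Var (i - 1))"
| "subst (Lam t) k s = Lam (subst t (Suc k) (lift 0 s))"
| "subst (App t u) k s = App (subst t k s) (subst u k s)"

fun closed_at :: "nat \<Rightarrow> dterm \<Rightarrow> bool" where
  "closed_at k (Var i) = (i < k)"
| "closed_at k (Lam t) = closed_at (Suc k) t"
| "closed_at k (App t u) = (closed_at k t \<and> closed_at k u)"

definition closed :: "dterm \<Rightarrow> bool" where
  "closed t = closed_at 0 t"

inductive det_value :: "dterm \<Rightarrow> bool" and det_term :: "dterm \<Rightarrow> bool" where
  dv_var: "det_value (Var i)"
| dv_lam: "det_term t \<Longrightarrow> det_value (Lam t)"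
| dt_val: "det_value v \<Longrightarrow> det_term v"
| dt_app: "det_term t \<Longrightarrow> det_value v \<Longrightarrow> det_term (App t v)"

inductive det_step :: "dterm \<Rightarrow> dterm \<Rightarrow> bool" where
  beta: "det_value v \<Longrightarrow> det_step (App (Lam t) v) (subst t 0 v)"
| ctx: "det_step t t' \<Longrightarrow> det_value v \<Longrightarrow> det_step (App t v) (App t' v)"

definition det_steps :: "nat \<Rightarrow> dterm \<Rightarrow> dterm \<Rightarrow> bool" where
  "det_steps m = det_step ^^ m"

definition diverges :: "dterm \<Rightarrow> bool" where
  "diverges t = (\<exists>f. f 0 = t \<and> (\<forall>j. det_step (f j) (f (Suc j))))"

definition lams :: "nat \<Rightarrow> dterm \<Rightarrow> dterm" where
  "lams n t = (Lam ^^ n) t"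

text \<open>character a_j (1-based j) of an alphabet of size p: \<lambda>x1...\<lambda>xp. xj\<close>
definition enc_char :: "nat \<Rightarrow> nat \<Rightarrow> dterm" where
  "enc_char p j = lams p (Var (p - j))"

text \<open>string given as list of 1-based character indices\<close>
fun enc_str :: "nat \<Rightarrow> nat list \<Rightarrow> dterm" where
  "enc_str p [] = lams (Suc p) (Var 0)"
| "enc_str p (j # r) = lams (Suc p) (App (Var (Suc p - j)) (enc_str p r))"

text \<open>reversed binary, least significant bit first\<close>
fun bin :: "nat \<Rightarrow> nat list" where
  "bin n = (if n = 0 then [] else (n mod 2) # bin (n div 2))"

declare bin.simps[simp del]

datatype binI = I0 | I1 | IL | IR
datatype binW = W0 | W1 | Blank
datatype move = MLeft | MRight | MStay

fun idxI :: "binI \<Rightarrow> nat" where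
  "idxI I0 = 1" | "idxI I1 = 2" | "idxI IL = 3" | "idxI IR = 4"

fun idxW :: "binW \<Rightarrow> nat" where
  "idxW W0 = 1" | "idxW W1 = 2" | "idxW Blank = 3"

text \<open>The ordered finite set of states Q is the whole finite linearly ordered type 'q.\<close>
definition idxQ :: "'q::{finite,linorder} \<Rightarrow> nat" where
  "idxQ s = card {q. q \<le> s}"

record 'q tm =
  s_in :: 'q
  s_T :: 'q
  s_F :: 'q
  delta :: "binI \<Rightarrow> binW \<Rightarrow> 'q \<Rightarrow> (int \<times> binW \<times> move \<times> 'q) option"

definition wf_tm :: "'q tm \<Rightarrow> bool" where
  "wf_tm M = (\<forall>b a s d a' mu s'. delta M b a s = Some (d, a', mu, s') \<longrightarrow>
       s \<notin> {s_T M, s_F M} \<and> d \<in> {-1, 0, 1})"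

record 'q config =
  inp :: "binI list"
  pos :: nat
  wleft :: "binW list"
  cur :: binW
  wright :: "binW list"
  state :: 'q

definition valid_input :: "binI list \<Rightarrow> bool" where
  "valid_input i = (\<exists>s'. set s' \<subseteq> {I0, I1} \<and> i = IL # s' @ [IR])"

definition is_config :: "'q config \<Rightarrow> bool" where
  "is_config C = (valid_input (inp C) \<and> pos C < length (inp C))"

definition is_final :: "'q tm \<Rightarrow> 'q config \<Rightarrow> bool" where
  "is_final M C = (state C \<in> {s_T M, s_F M})"

definition stays_on_input :: "'q tm \<Rightarrow> bool" where
  "stays_on_input M = (\<forall>i n a s d a' mu s'. valid_input i \<longrightarrow> n < length i \<longrightarrow>
      delta M (i ! n) a s = Some (d, a', mu, s') \<longrightarrow>
      0 \<le> int n + d \<and> int n + d < int (length i))"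

fun move_work :: "move \<Rightarrow> binW list \<Rightarrow> binW \<Rightarrow> binW list \<Rightarrow> binW list \<times> binW \<times> binW list" where
  "move_work MStay wl a' wr = (wl, a', wr)"
| "move_work MLeft wl a' wr =
     (if wl = [] then ([], Blank, a' # wr) else (butlast wl, last wl, a' # wr))"
| "move_work MRight wl a' wr =
     (case wr of [] \<Rightarrow> (wl @ [a'], Blank, []) | a'' # w \<Rightarrow> (wl @ [a'], a'', w))"

inductive tm_step :: "'q tm \<Rightarrow> 'q config \<Rightarrow> 'q config \<Rightarrow> bool" for M where
  "\<not> is_final M C \<Longrightarrow> pos C < length (inp C) \<Longrightarrow>
   delta M (inp C ! pos C) (cur C) (state C) = Some (d, a', mu, s') \<Longrightarrow>
   0 \<le> int (pos C) + d \<Longrightarrow>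
   move_work mu (wleft C) a' (wright C) = (wl, a, wr) \<Longrightarrow>
   tm_step M C \<lparr>inp = inp C, pos = nat (int (pos C) + d), wleft = wl, cur = a,
                 wright = wr, state = s'\<rparr>"

definition enc_config :: "'q::{finite,linorder} config \<Rightarrow> dterm" where
  "enc_config C = Lam (App (App (App (App (App (App (Var 0)
      (enc_str 4 (map idxI (inp C))))
      (enc_str 2 (map Suc (bin (pos C)))))
      (enc_str 3 (map idxW (rev (wleft C)))))
      (enc_char 3 (idxW (cur C))))
      (enc_str 3 (map idxW (wright C))))
      (enc_char (card (UNIV :: 'q set)) (idxQ (state C))))"

end

theory Submission
  imports Defs
begin


lemma dv_simps[simp]:
  "det_value (Var i)"
  "det_value (Lam t) = det_term t"
  "\<not> det_value (App t u)"
  by (auto intro: det_value_det_term.intros elim: det_value.cases)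

lemma dt_App[simp]: "det_term (App t v) = (det_term t \<and> det_value v)"
  by (auto intro: det_value_det_term.intros elim: det_term.cases)

lemma dt_val[simp]: "det_value t \<Longrightarrow> det_term t"
  by (rule det_value_det_term.intros)

lemma dt_Var[simp]: "det_term (Var i)"
  by simp

lemma dt_Lam[simp]: "det_term (Lam t) = det_term t"
  by (auto intro: det_value_det_term.intros elim: det_term.cases)

section \<open>Closed terms\<close>

lemma closed_at_mono: "closed_at n t \<Longrightarrow> n \<le> m \<Longrightarrow> closed_at m t"
  by (induction t arbitrary: n m) auto

lemma lift_closed_at: "closed_at n t \<Longrightarrow> n \<le> k \<Longrightarrow> lift k t = t"
  by (induction t arbitrary: n k) auto

lemma subst_closed_at: "closed_at n t \<Longrightarrow> n \<le> k \<Longrightarrow> subst t k s = t"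
  by (induction t arbitrary: n k s) auto

lemma lift_closed[simp]: "closed_at 0 t \<Longrightarrow> lift k t = t"
  using lift_closed_at by blast

lemma subst_closed[simp]: "closed_at 0 t \<Longrightarrow> subst t k s = t"
  using subst_closed_at by blast

lemma subst_lift[simp]: "subst (lift k t) k s = t"
  by (induction t arbitrary: k s) auto

fun apps :: "dterm \<Rightarrow> dterm list \<Rightarrow> dterm" where
  "apps t [] = t"
| "apps t (v # vs) = apps (App t v) vs"

lemma apps_append[simp]: "apps t (vs @ ws) = apps (apps t vs) ws"
  by (induction vs arbitrary: t) auto

lemma subst_apps[simp]: "subst (apps t vs) k s = apps (subst t k s) (map (\<lambda>v. subst v k s) vs)"
  by (induction vs arbitrary: t) auto

lemma lift_apps[simp]: "lift k (apps t vs) = apps (lift k t) (map (lift k) vs)"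
  by (induction vs arbitrary: t) auto

lemma closed_at_apps[simp]: "closed_at n (apps t vs) = (closed_at n t \<and> (\<forall>v\<in>set vs. closed_at n v))"
  by (induction vs arbitrary: t) auto

lemma det_term_apps[simp]: "det_term (apps t vs) = (det_term t \<and> (\<forall>v\<in>set vs. det_value v))"
  by (induction vs arbitrary: t) auto

lemma map_subst_closed[simp]: "\<forall>v\<in>set vs. closed_at 0 v \<Longrightarrow> map (\<lambda>v. subst v k s) vs = vs"
  by (induction vs) auto

lemma map_lift_closed[simp]: "\<forall>v\<in>set vs. closed_at 0 v \<Longrightarrow> map (lift k) vs = vs"
  by (induction vs) auto

section \<open>Reduction\<close>

lemma steps_ctx: "(det_step ^^ n) t t' \<Longrightarrow> det_value v \<Longrightarrow> (det_step ^^ n) (App t v) (App t' v)"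
proof (induction n arbitrary: t')
  case 0 then show ?case by simp
next
  case (Suc n)
  then obtain u where "(det_step ^^ n) t u" "det_step u t'" by auto
  then show ?case using Suc by (auto intro: det_step.ctx)
qed

lemma step_apps: "det_step t t' \<Longrightarrow> \<forall>v\<in>set vs. det_value v \<Longrightarrow> det_step (apps t vs) (apps t' vs)"
  by (induction vs arbitrary: t t') (auto intro: det_step.ctx)

lemma steps_apps: "(det_step ^^ n) t t' \<Longrightarrow> \<forall>v\<in>set vs. det_value v \<Longrightarrow> (det_step ^^ n) (apps t vs) (apps t' vs)"
  by (induction vs arbitrary: t t') (auto intro: steps_ctx)

lemma steps_trans: "(det_step ^^ a) t u \<Longrightarrow> (det_step ^^ b) u v \<Longrightarrow> (det_step ^^ (a + b)) t v"
  by (metis relpowp_add relcomppI)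

definition red :: "nat \<Rightarrow> dterm \<Rightarrow> dterm \<Rightarrow> bool" where
  "red n t t' = (\<exists>m\<le>n. (det_step ^^ m) t t')"

lemma red_refl: "red n t t"
  unfolding red_def by (rule exI[of _ 0]) auto

lemma red_trans: "red a t u \<Longrightarrow> red b u v \<Longrightarrow> red (a + b) t v"
  unfolding red_def by (metis add_le_mono steps_trans)

lemma red_trans': "red a t u \<Longrightarrow> red b u v \<Longrightarrow> a + b \<le> c \<Longrightarrow> red c t v"
  unfolding red_def by (metis add_le_mono steps_trans order.trans)

lemma red_mono: "red a t u \<Longrightarrow> a \<le> b \<Longrightarrow> red b t u"
  unfolding red_def using order.trans by blast

lemma red_apps: "red n t t' \<Longrightarrow> \<forall>v\<in>set vs. det_value v \<Longrightarrow> red n (apps t vs) (apps t' vs)"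
  unfolding red_def using steps_apps by blast

lemma red_App: "red n t t' \<Longrightarrow> det_value v \<Longrightarrow> red n (App t v) (App t' v)"
  unfolding red_def using steps_ctx by blast

fun hstep :: "dterm \<Rightarrow> dterm option" where
  "hstep (App (Lam t) v) = (if det_value v then Some (subst t 0 v) else None)"
| "hstep (App (App t u) v) = (if det_value v then map_option (\<lambda>t'. App t' v) (hstep (App t u)) else None)"
| "hstep _ = None"

lemma hstep_sound: "hstep t = Some t' \<Longrightarrow> det_step t t'"
  by (induction t arbitrary: t' rule: hstep.induct)
     (auto split: if_splits intro: det_step.intros)

fun hsteps :: "nat \<Rightarrow> dterm \<Rightarrow> dterm option" where
  "hsteps 0 t = Some t"
| "hsteps (Suc n) t = (case hstep t of None \<Rightarrow> None | Some t' \<Rightarrow> hsteps n t')"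

lemma hsteps_sound: "hsteps n t = Some t' \<Longrightarrow> (det_step ^^ n) t t'"
proof (induction n arbitrary: t)
  case 0 then show ?case by simp
next
  case (Suc n)
  then obtain u where u: "hstep t = Some u" "hsteps n u = Some t'" by (auto split: option.splits)
  then have "(det_step ^^ n) u t'" using Suc by blast
  then show ?case using hstep_sound[OF u(1)] by (metis relpowp_Suc_I2)
qed

lemma hsteps_numeral[simp]: "hsteps (numeral k) t = (case hstep t of None \<Rightarrow> None | Some t' \<Rightarrow> hsteps (pred_numeral k) t')"
  by (simp add: numeral_eq_Suc)

lemma red_hsteps: "hsteps m t = Some t' \<Longrightarrow> m \<le> n \<Longrightarrow> red n t t'"
  unfolding red_def using hsteps_sound by blast

lemma lams_0[simp]: "lams 0 t = t" by (simp add: lams_def)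
lemma lams_Suc[simp]: "lams (Suc n) t = Lam (lams n t)" by (simp add: lams_def)
lemma lams_numeral[simp]: "lams (numeral k) t = Lam (lams (pred_numeral k) t)"
  by (simp add: numeral_eq_Suc)

lemma closed_at_lams[simp]: "closed_at n (lams k t) = closed_at (n + k) t"
  by (induction k arbitrary: n) auto

lemma det_value_lams[simp]: "det_value (lams (Suc k) t) = det_term t"
  by (induction k) auto

lemma det_term_lams[simp]: "det_term (lams k t) = det_term t"
  by (induction k) auto

lemma subst_lams_closed: "closed_at 0 v \<Longrightarrow> subst (lams n t) k v = lams n (subst t (k + n) v)"
  by (induction n arbitrary: k) auto

section \<open>Encodings\<close>

lemma closed_enc_str[simp]: "\<forall>j\<in>set l. 0 < j \<Longrightarrow> closed_at n (enc_str p l)"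
  by (induction l arbitrary: n) (auto intro: closed_at_mono)

lemma det_value_enc_str[simp]: "det_value (enc_str p l)"
  by (induction l) auto

lemma closed_enc_char[simp]: "0 < j \<Longrightarrow> j \<le> p \<Longrightarrow> closed_at n (enc_char p j)"
  by (simp add: enc_char_def)

lemma det_value_enc_char[simp]: "det_value (enc_char p j)"
  by (cases p) (auto simp: enc_char_def)

lemma lams_const_steps:
  "closed_at 0 u \<Longrightarrow> \<forall>v\<in>set vs. closed_at 0 v \<and> det_value v \<Longrightarrow>
   (det_step ^^ length vs) (apps (lams (length vs) u) vs) u"
proof (induction vs)
  case Nil then show ?case by simp
next
  case (Cons v vs)
  have "det_step (App (Lam (lams (length vs) u)) v) (lams (length vs) u)"
    using det_step.beta[of v "lams (length vs) u"] Cons.prems by (simp add: subst_lams_closed)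
  then have "(det_step ^^ 1) (apps (lams (length (v#vs)) u) (v # vs)) (apps (lams (length vs) u) vs)"
    using Cons.prems step_apps by fastforce
  then show ?case using Cons steps_trans[of 1] by fastforce
qed

lemma lams_var_steps:
  "length vs = n \<Longrightarrow> x < n \<Longrightarrow> \<forall>v\<in>set vs. closed_at 0 v \<and> det_value v \<Longrightarrow>
   (det_step ^^ n) (apps (lams n (Var x)) vs) (vs ! (n - 1 - x))"
proof (induction vs arbitrary: n)
  case Nil then show ?case by simp
next
  case (Cons v vs)
  then obtain n' where n': "n = Suc n'" "length vs = n'" by auto
  have st: "det_step (App (Lam (lams n' (Var x))) v) (lams n' (subst (Var x) n' v))"
    using det_step.beta[of v "lams n' (Var x)"] Cons.prems by (simp add: subst_lams_closed)
  then have 1: "(det_step ^^ 1) (apps (lams n (Var x)) (v # vs)) (apps (lams n' (subst (Var x) n' v)) vs)"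
    using Cons.prems n' step_apps by fastforce
  show ?case
  proof (cases "x = n'")
    case True
    then have "(det_step ^^ n') (apps (lams n' (subst (Var x) n' v)) vs) v"
      using lams_const_steps[of v vs] Cons.prems n' by simp
    then show ?thesis using 1 steps_trans[OF 1] n' True by simp
  next
    case False
    then have "x < n'" using Cons.prems n' by simp
    then have "(det_step ^^ n') (apps (lams n' (subst (Var x) n' v)) vs) (vs ! (n' - 1 - x))"
      using Cons.IH[of n'] Cons.prems n' by simp
    moreover have "vs ! (n' - 1 - x) = (v # vs) ! (n - 1 - x)"
      using \<open>x < n'\<close> n' by (simp add: nth_Cons')
    ultimately show ?thesis using steps_trans[OF 1] n' by simp
  qed
qed

lemma enc_char_steps:
  "length vs = p \<Longrightarrow> 0 < j \<Longrightarrow> j \<le> p \<Longrightarrow> \<forall>v\<in>set vs. closed_at 0 v \<and> det_value v \<Longrightarrow>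
   (det_step ^^ p) (apps (enc_char p j) vs) (vs ! (j - 1))"
  using lams_var_steps[of vs p "p - j"] unfolding enc_char_def by simp

lemma enc_char_red:
  "length vs = p \<Longrightarrow> 0 < j \<Longrightarrow> j \<le> p \<Longrightarrow> \<forall>v\<in>set vs. closed_at 0 v \<and> det_value v \<Longrightarrow>
   p \<le> n \<Longrightarrow> red n (apps (enc_char p j) vs) (vs ! (j - 1))"
  unfolding red_def using enc_char_steps by blast

section \<open>Divergence\<close>

lemma diverges_shift: "diverges t \<Longrightarrow> \<exists>u. det_step t u \<and> diverges u"
proof -
  assume "diverges t"
  then obtain f where f: "f 0 = t" "\<forall>j. det_step (f j) (f (Suc j))" unfolding diverges_def by blast
  then have "det_step t (f 1)" by (metis One_nat_def)
  moreover have "diverges (f 1)" unfolding diverges_def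
    by (rule exI[of _ "\<lambda>j. f (Suc j)"]) (simp add: f)
  ultimately show ?thesis by blast
qed

lemma diverges_back: "det_step t u \<Longrightarrow> diverges u \<Longrightarrow> diverges t"
proof -
  assume a: "det_step t u" "diverges u"
  then obtain f where f: "f 0 = u" "\<forall>j. det_step (f j) (f (Suc j))" unfolding diverges_def by blast
  show ?thesis unfolding diverges_def
    by (rule exI[of _ "\<lambda>j. case j of 0 \<Rightarrow> t | Suc i \<Rightarrow> f i"]) (simp add: f a split: nat.split)
qed

lemma diverges_intro:
  assumes "Q t" and "\<And>t. Q t \<Longrightarrow> \<exists>u. det_step t u \<and> Q u"
  shows "diverges t"
proof -
  define nxt where "nxt = (\<lambda>t. SOME u. det_step t u \<and> Q u)"
  define f where "f = (\<lambda>n. (nxt ^^ n) t)"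
  have Qf: "Q (f n)" for n
  proof (induction n)
    case 0 then show ?case using assms(1) by (simp add: f_def)
  next
    case (Suc n)
    then show ?case unfolding f_def nxt_def using assms(2) by simp (metis (mono_tags, lifting) someI_ex)
  qed
  have "det_step (f n) (f (Suc n))" for n
    using Qf[of n] assms(2) unfolding f_def nxt_def by simp (metis (mono_tags, lifting) someI_ex)
  then show ?thesis unfolding diverges_def by (auto simp: f_def intro!: exI[of _ f])
qed

lemma diverges_loop:
  assumes "P t0"
    and step: "\<And>t. P t \<Longrightarrow> diverges t \<or> (\<exists>t' j. P t' \<and> (det_step ^^ Suc j) t t')"
  shows "diverges t0"
proof -
  define Q where "Q t = (\<exists>u j. (det_step ^^ j) t u \<and> (P u \<or> diverges u))" for t
  have "Q t0" using assms(1) unfolding Q_def by (rule_tac x=t0 in exI, rule_tac x=0 in exI) simp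
  moreover have "\<exists>u. det_step t u \<and> Q u" if "Q t" for t
  proof -
    obtain u j where uj: "(det_step ^^ j) t u" "P u \<or> diverges u" using \<open>Q t\<close> Q_def by blast
    show ?thesis
    proof (cases j)
      case (Suc j')
      then obtain w where "det_step t w" "(det_step ^^ j') w u" using uj(1) relpowp_Suc_D2 by metis
      then show ?thesis using uj(2) unfolding Q_def by blast
    next
      case 0
      then have "t = u" using uj by simp
      show ?thesis
      proof (cases "diverges u")
        case True
        then obtain w where "det_step u w" "diverges w" using diverges_shift by blast
        then show ?thesis using \<open>t = u\<close> unfolding Q_def by (metis relpowp_0_I)
      next
        case False
        then have "P u" using uj by simp
        then obtain t' j'' where "P t'" "(det_step ^^ Suc j'') u t'" using step False by blast
        then obtain w where "det_step u w" "(det_step ^^ j'') w t'" using relpowp_Suc_D2 by metis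
        then show ?thesis using \<open>t = u\<close> \<open>P t'\<close> unfolding Q_def by blast
      qed
    qed
  qed
  ultimately show ?thesis by (rule diverges_intro)
qed

lemma diverges_App: "diverges t \<Longrightarrow> det_value v \<Longrightarrow> diverges (App t v)"
proof -
  assume a: "diverges t" "det_value v"
  then obtain f where f: "f 0 = t" "\<forall>j. det_step (f j) (f (Suc j))" unfolding diverges_def by blast
  show ?thesis unfolding diverges_def
    by (rule exI[of _ "\<lambda>j. App (f j) v"]) (simp add: f a det_step.ctx)
qed

lemma diverges_prefix: "(det_step ^^ n) t u \<Longrightarrow> diverges u \<Longrightarrow> diverges t"
proof (induction n arbitrary: t)
  case 0 then show ?case by simp
next
  case (Suc n)
  then obtain w where "det_step t w" "(det_step ^^ n) w u" using relpowp_Suc_D2 by metis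
  then show ?case using Suc diverges_back by blast
qed


definition DECb :: "dterm" where
  "DECb = Lam (Lam (App (App (App (App (App (Var 1) (Lam (Lam (Lam (App (App (App (Var 1) (Var 1)) (Var 2)) (Lam (App (Var 1) (Lam (Lam (Lam (App (Var 1) (Var 3)))))))))))) (Lam (Lam (Lam (App (App (App (App (App (Var 2) (Lam (Lam (Lam (App (Var 1) (Lam (Lam (Lam (App (Var 2) (Var 3)))))))))) (Lam (Lam (Lam (App (Var 1) (Lam (Lam (Lam (App (Var 2) (Var 3)))))))))) (Lam (Lam (App (Var 1) (enc_str 2 []))))) (Var 0)) (Var 2)))))) (Lam (Lam (App (Var 0) (enc_str 2 []))))) (Var 2)) (Var 0)))"

definition DECt :: dterm where "DECt = Lam DECb"

definition INCb :: "dterm" where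
  "INCb = Lam (Lam (App (App (App (App (App (Var 1) (Lam (Lam (Lam (App (Var 0) (Lam (Lam (Lam (App (Var 1) (Var 5)))))))))) (Lam (Lam (Lam (App (App (App (Var 1) (Var 1)) (Var 2)) (Lam (App (Var 1) (Lam (Lam (Lam (App (Var 2) (Var 3)))))))))))) (Lam (Lam (App (Var 0) (Lam (Lam (Lam (App (Var 1) (enc_str 2 []))))))))) (Var 2)) (Var 0)))"

definition INCt :: dterm where "INCt = Lam INCb"

definition SPLITb :: "dterm" where
  "SPLITb = Lam (Lam (Lam (Lam (App (App (App (App (App (App (App (App (Var 3) (Lam (Lam (Lam (Lam (Lam (Lam (App (App (App (DECt) (DECt)) (Var 3)) (Lam (App (App (App (App (App (App (App (App (App (Var 2) (Lam (Lam (Lam (Lam (Lam (App (App (App (App (App (Var 3) (Var 3)) (Var 2)) (Lam (Lam (Lam (Lam (Lam (App (Var 4) (Var 6)))))))) (Var 4)) (Var 0)))))))) (Lam (Lam (Lam (Lam (Lam (App (App (App (App (App (Var 3) (Var 3)) (Var 2)) (Lam (Lam (Lam (Lam (Lam (App (Var 3) (Var 6)))))))) (Var 4)) (Var 0)))))))) (Lam (Lam (Lam (Lam (Lam (App (App (App (App (App (Var 3) (Var 3)) (Var 2)) (Lam (Lam (Lam (Lam (Lam (App (Var 2) (Var 6)))))))) (Var 4)) (Var 0)))))))) (Lam (Lam (Lam (Lam (Lam (App (App (App (App (App (Var 3) (Var 3)) (Var 2)) (Lam (Lam (Lam (Lam (Lam (App (Var 1) (Var 6)))))))) (Var 4)) (Var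 0)))))))) (Lam (Lam (Lam (Lam (App (App (Var 0) (Var 1)) (enc_str 4 []))))))) (Var 5)) (Var 0)) (Var 3)) (Var 1))))))))))) (Lam (Lam (Lam (Lam (Lam (Lam (App (App (App (DECt) (DECt)) (Var 3)) (Lam (App (App (App (App (App (App (App (App (App (Var 2) (Lam (Lam (Lam (Lam (Lam (App (App (App (App (App (Var 3) (Var 3)) (Var 2)) (Lam (Lam (Lam (Lam (Lam (App (Var 4) (Var 6)))))))) (Var 4)) (Var 0)))))))) (Lam (Lam (Lam (Lam (Lam (App (App (App (App (App (Var 3) (Var 3)) (Var 2)) (Lam (Lam (Lam (Lam (Lam (App (Var 3) (Var 6)))))))) (Var 4)) (Var 0)))))))) (Lam (Lam (Lam (Lam (Lam (App (App (App (App (App (Var 3) (Var 3)) (Var 2)) (Lam (Lam (Lam (Lam (Lam (App (Var 2) (Var 6)))))))) (Var 4)) (Var 0)))))))) (Lam (Lam (Lam (Lam (Lam (App (App (App (App (App (Var 3) (Var 3)) (Var 2)) (Lam (Lam (Lam (Lam (Lam (App (Var 1) (Var 6)))))))) (Var 4)) (Var 0)))))))) (Lam (Lam (Lam (Lam (App (App (Var 0) (Var 1)) (enc_str 4 []))))))) (Var 5)) (Var 0)) (Var 3)) (Var 1))))))))))) (Lam (Lam (Lam (Lam (Lam (App (App (Var 0) (Var 2)) (Var 1)))))))) (Var 4)) (Var 3)) (Var 2)) (Var 1)) (Var 0)))))"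

definition SPLITt :: dterm where "SPLITt = Lam SPLITb"

definition MIpb :: "binI \<Rightarrow> dterm" where
  "MIpb b = Lam (Lam (Lam (App (App (App (INCt) (INCt)) (Var 1)) (Lam (App (App (App (Var 1) (Lam (Lam (Lam (Lam (Lam (App (Var (5 - idxI b)) (Var 9)))))))) (Var 3)) (Var 0))))))"

definition MIzb :: "binI \<Rightarrow> dterm" where
  "MIzb b = Lam (Lam (Lam (App (App (App (Var 0) (Var 3)) (Lam (Lam (Lam (Lam (Lam (App (Var (5 - idxI b)) (Var 7)))))))) (Var 1))))"

definition MImb :: "binI \<Rightarrow> dterm" where
  "MImb b = Lam (Lam (Lam (App (App (App (DECt) (DECt)) (Var 1)) (Lam (App (App (App (App (App (App (App (App (Var 4) (Lam (Lam (Lam (Lam (App (App (App (Var 0) (Var 3)) (Lam (Lam (Lam (Lam (Lam (App (Var 4) (Lam (Lam (Lam (Lam (Lam (App (Var (5 - idxI b)) (Var 12)))))))))))))) (Var 1))))))) (Lam (Lam (Lam (Lam (App (App (App (Var 0) (Var 3)) (Lam (Lam (Lam (Lam (Lam (App (Var 3) (Lam (Lam (Lam (Lam (Lam (App (Var (5 - idxI b)) (Var 12)))))))))))))) (Var 1))))))) (Lam (Lam (Lam (Lam (App (App (App (Var 0) (Var 3)) (Lam (Lam (Lam (Lam (Lam (App (Var 2) (Lam (Lam (Lam (Lam (Lam (App (Var (5 - idxI b)) (Var 12)))))))))))))) (Var 1))))))) (Lam (Lam (Lam (Lam (App (App (App (Var 0) (Var 3)) (Lam (Lam (Lam (Lam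 (Lam (App (Var 1) (Lam (Lam (Lam (Lam (Lam (App (Var (5 - idxI b)) (Var 12)))))))))))))) (Var 1))))))) (Lam (Lam (Lam (App (App (App (Var 0) (enc_str 4 [])) (Var 2)) (Var 1)))))) (Var 3)) (Var 0)) (Var 1))))))"

definition MIb :: "int \<Rightarrow> binI \<Rightarrow> dterm" where
  "MIb d b = (if d = 1 then MIpb b else if d = 0 then MIzb b else MImb b)"

definition MI :: "int \<Rightarrow> binI \<Rightarrow> dterm" where "MI d b = Lam (MIb d b)"

definition MWb :: "move \<Rightarrow> binW \<Rightarrow> dterm" where
  "MWb mu a = (case mu of MStay \<Rightarrow> Lam (Lam (App (App (App (Var 0) (Var 2)) (enc_char 3 (idxW a))) (Var 1))) | MLeft \<Rightarrow> Lam (Lam (App (App (App (App (App (App (Var 2) (Lam (Lam (Lam (App (App (App (Var 0) (Var 2)) (enc_char 3 1)) (Lam (Lam (Lam (Lam (App (Var (4 - idxW a)) (Var 5))))))))))) (Lam (Lam (Lam (App (App (App (Var 0) (Var 2)) (enc_char 3 2)) (Lam (Lam (Lam (Lam (App (Var (4 - idxW a)) (Var 5))))))))))) (Lam (Lam (Lam (App (App (App (Var 0) (Var 2)) (enc_char 3 3)) (Lam (Lam (Lam (Lam (App (Var (4 - idxW a)) (Var 5))))))))))) (Lam (Lam (App (App (App (Var 0) (enc_str 3 [])) (enc_char 3 3)) (Lam (Lam (Lam (Lam (App (Var (4 - idxW a)) (Var 5)))))))))) (Var 1)) (Var 0))) | MRight \<Rightarrow> Lam (Lam (App (App (App (App (App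 (App (Var 1) (Lam (Lam (Lam (App (App (App (Var 0) (Lam (Lam (Lam (Lam (App (Var (4 - idxW a)) (Var 5))))))) (enc_char 3 1)) (Var 2)))))) (Lam (Lam (Lam (App (App (App (Var 0) (Lam (Lam (Lam (Lam (App (Var (4 - idxW a)) (Var 5))))))) (enc_char 3 2)) (Var 2)))))) (Lam (Lam (Lam (App (App (App (Var 0) (Lam (Lam (Lam (Lam (App (Var (4 - idxW a)) (Var 5))))))) (enc_char 3 3)) (Var 2)))))) (Lam (Lam (App (App (App (Var 0) (Lam (Lam (Lam (Lam (App (Var (4 - idxW a)) (Var 5))))))) (enc_char 3 3)) (enc_str 3 []))))) (Var 2)) (Var 0))))"

definition MW :: "move \<Rightarrow> binW \<Rightarrow> dterm" where "MW mu a = Lam (MWb mu a)"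

definition encQ :: "'q::{finite,linorder} \<Rightarrow> dterm" where "encQ s = enc_char (card (UNIV :: 'q set)) (idxQ s)"

definition LSOMEb :: "int \<Rightarrow> binI \<Rightarrow> binW \<Rightarrow> move \<Rightarrow> 'q::{finite,linorder} \<Rightarrow> dterm" where
  "LSOMEb d b a mu s = Lam (Lam (Lam (Lam (Lam (Lam (App (App (App (App (MI d b) (Var 4)) (Var 6)) (Var 3)) (Lam (Lam (Lam (App (App (App (MW mu a) (Var 5)) (Var 4)) (Lam (Lam (Lam (App (App (App (App (App (App (App (App (App (Var 6) (Var 6)) (Var 11)) (Var 5)) (Var 4)) (Var 3)) (Var 2)) (Var 1)) (Var 0)) (encQ s)))))))))))))))"

definition LSOME :: "int \<Rightarrow> binI \<Rightarrow> binW \<Rightarrow> move \<Rightarrow> 'q::{finite,linorder} \<Rightarrow> dterm" where "LSOME d b a mu s = Lam (LSOMEb d b a mu s)"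

definition LNONEb :: "dterm" where
  "LNONEb = Lam (Lam (Lam (Lam (Lam (Lam (App (Lam (App (Var 0) (Var 0))) (Lam (App (Var 0) (Var 0)))))))))"

definition LNONE :: dterm where "LNONE = Lam LNONEb"

definition L :: "'q::{finite,linorder} tm \<Rightarrow> 'q \<Rightarrow> binW \<Rightarrow> binI \<Rightarrow> dterm" where
  "L M s a b = (case delta M b a s of None \<Rightarrow> LNONE | Some (d, a', mu, s') \<Rightarrow> LSOME d b a' mu s')"

definition ATb :: "'q::{finite,linorder} tm \<Rightarrow> 'q \<Rightarrow> binW \<Rightarrow> dterm" where
  "ATb M s a = Lam (Lam (Lam (Lam (Lam (Lam (App (App (App (App (App (App (App (App (App (App (App (Var 4) (L M s a I0)) (L M s a I1)) (L M s a IL)) (L M s a IR)) (Lam (Lam (Lam (Lam (Lam (Lam (Var 5)))))))) (Var 6)) (Var 5)) (Var 3)) (Var 2)) (Var 1)) (Var 0)))))))"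

definition AT :: "'q::{finite,linorder} tm \<Rightarrow> 'q \<Rightarrow> binW \<Rightarrow> dterm" where "AT M s a = Lam (ATb M s a)"

definition BRNb :: "'q::{finite,linorder} tm \<Rightarrow> 'q \<Rightarrow> dterm" where
  "BRNb M s = Lam (Lam (Lam (Lam (Lam (Lam (Lam (App (App (App (App (App (App (App (App (App (App (Var 2) (AT M s W0)) (AT M s W1)) (AT M s Blank)) (Var 7)) (Var 6)) (Var 5)) (Var 4)) (Var 3)) (Var 1)) (Var 0))))))))"

definition BRN :: "'q::{finite,linorder} tm \<Rightarrow> 'q \<Rightarrow> dterm" where "BRN M s = Lam (BRNb M s)"

definition BRFb :: "'q::{finite,linorder} \<Rightarrow> dterm" where
  "BRFb s = Lam (Lam (Lam (Lam (Lam (Lam (Lam (Lam (App (Var 0) (Lam (App (App (App (App (App (App (Var 0) (Var 9)) (Var 6)) (Var 5)) (Var 4)) (Var 3)) (encQ s)))))))))))"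

definition BRF :: "'q::{finite,linorder} \<Rightarrow> dterm" where "BRF s = Lam (BRFb s)"

definition BR :: "'q::{finite,linorder} tm \<Rightarrow> 'q \<Rightarrow> dterm" where
  "BR M s = (if s \<in> {s_T M, s_F M} then BRF s else BRN M s)"

definition BRs :: "'q::{finite,linorder} tm \<Rightarrow> dterm list" where
  "BRs M = map (BR M) (sorted_list_of_set (UNIV :: 'q set))"

definition LOOPb :: "'q::{finite,linorder} tm \<Rightarrow> dterm" where
  "LOOPb M = lams 8 (apps (apps (Var 0) (BRs M)) [Var 7, Var 6, Var 5, Var 4, Var 3, Var 2, Var 1, Var 8])"

definition LOOP :: "'q::{finite,linorder} tm \<Rightarrow> dterm" where "LOOP M = Lam (LOOPb M)"

definition INITb :: "'q::{finite,linorder} tm \<Rightarrow> dterm" where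
  "INITb M = Lam (Lam (Lam (Lam (Lam (App (App (App (App (App (SPLITt) (SPLITt)) (Var 4)) (enc_str 4 [])) (Var 5)) (Lam (Lam (App (App (App (App (App (App (App (App (App (LOOP M) (LOOP M)) (Var 7)) (Var 1)) (Var 0)) (Var 6)) (Var 5)) (Var 4)) (Var 3)) (Var 2)))))))))"

definition INIT :: "'q::{finite,linorder} tm \<Rightarrow> dterm" where "INIT M = Lam (INITb M)"

definition TRANSb :: "'q::{finite,linorder} tm \<Rightarrow> dterm" where
  "TRANSb M = Lam (App (App (Var 0) (INIT M)) (Var 1))"

definition TRANS :: "'q::{finite,linorder} tm \<Rightarrow> dterm" where "TRANS M = Lam (TRANSb M)"


lemma idxQ_pos: "0 < idxQ (s::'q::{finite,linorder})"
  unfolding idxQ_def by (subst card_gt_0_iff) auto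

lemma idxQ_le: "idxQ (s::'q::{finite,linorder}) \<le> card (UNIV :: 'q set)"
  unfolding idxQ_def by (rule card_mono) auto

lemma closed_encQ[simp]: "closed_at n (encQ s)"
  unfolding encQ_def by (rule closed_enc_char) (simp_all add: idxQ_pos idxQ_le)

lemma dv_encQ[simp]: "det_value (encQ s)"
  unfolding encQ_def by simp

lemma closed0_imp: "closed_at 0 t \<Longrightarrow> closed_at n t"
  by (erule closed_at_mono) simp

lemma idxI_pos[simp]: "0 < idxI b" by (cases b) auto
lemma idxW_pos[simp]: "0 < idxW b" by (cases b) auto

lemma closed_DEC[simp]: "closed_at n DECt"
  by (rule closed_at_mono[of 0]) (simp_all add: DECt_def DECb_def)
lemma dv_DEC[simp]: "det_value DECt" by (simp add: DECt_def DECb_def)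
lemma closed_INC[simp]: "closed_at n INCt"
  by (rule closed_at_mono[of 0]) (simp_all add: INCt_def INCb_def)
lemma dv_INC[simp]: "det_value INCt" by (simp add: INCt_def INCb_def)
lemma closed_SPLIT[simp]: "closed_at n SPLITt"
  by (rule closed_at_mono[of 0]) (simp_all add: SPLITt_def SPLITb_def)
lemma dv_SPLIT[simp]: "det_value SPLITt" by (simp add: SPLITt_def SPLITb_def)
lemma closed_MI[simp]: "closed_at n (MI d b)"
  by (rule closed0_imp) (cases b; simp_all add: MI_def MIb_def MIpb_def MIzb_def MImb_def)
lemma dv_MI[simp]: "det_value (MI d b)" by (cases b; simp add: MI_def MIb_def MIpb_def MIzb_def MImb_def)
lemma closed_MW[simp]: "closed_at n (MW mu a)"
  by (rule closed0_imp) (cases a; cases mu; simp_all add: MW_def MWb_def)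
lemma dv_MW[simp]: "det_value (MW mu a)" by (cases a; cases mu; simp add: MW_def MWb_def)
lemma closed_LSOME[simp]: "closed_at n (LSOME d b a mu s)"
  by (rule closed_at_mono[of 0]) (simp_all add: LSOME_def LSOMEb_def)
lemma dv_LSOME[simp]: "det_value (LSOME d b a mu s)" by (simp add: LSOME_def LSOMEb_def)
lemma closed_LNONE[simp]: "closed_at n LNONE"
  by (rule closed_at_mono[of 0]) (simp_all add: LNONE_def LNONEb_def)
lemma dv_LNONE[simp]: "det_value LNONE" by (simp add: LNONE_def LNONEb_def)
lemma closed_L[simp]: "closed_at n (L M s a b)"
  by (simp add: L_def split: option.split)
lemma dv_L[simp]: "det_value (L M s a b)"
  by (simp add: L_def split: option.split)
lemma closed_AT[simp]: "closed_at n (AT M s a)"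
  by (rule closed_at_mono[of 0]) (simp_all add: AT_def ATb_def)
lemma dv_AT[simp]: "det_value (AT M s a)" by (simp add: AT_def ATb_def)
lemma closed_BRN[simp]: "closed_at n (BRN M s)"
  by (rule closed_at_mono[of 0]) (simp_all add: BRN_def BRNb_def)
lemma dv_BRN[simp]: "det_value (BRN M s)" by (simp add: BRN_def BRNb_def)
lemma closed_BRF[simp]: "closed_at n (BRF s)"
  by (rule closed_at_mono[of 0]) (simp_all add: BRF_def BRFb_def)
lemma dv_BRF[simp]: "det_value (BRF s)" by (simp add: BRF_def BRFb_def)
lemma closed_BR[simp]: "closed_at n (BR M s)" by (simp add: BR_def)
lemma dv_BR[simp]: "det_value (BR M s)" by (simp add: BR_def)
lemma closed_BRs[simp]: "\<forall>v\<in>set (BRs M). closed_at n v" by (simp add: BRs_def)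
lemma dv_BRs[simp]: "\<forall>v\<in>set (BRs M). det_value v" by (simp add: BRs_def)
lemma closed_LOOP[simp]: "closed_at n (LOOP M)"
  by (rule closed_at_mono[of 0]) (simp_all add: LOOP_def LOOPb_def)
lemma dv_LOOP[simp]: "det_value (LOOP M)" by (simp add: LOOP_def LOOPb_def)
lemma closed_INIT[simp]: "closed_at n (INIT M)"
  by (rule closed_at_mono[of 0]) (simp_all add: INIT_def INITb_def)
lemma dv_INIT[simp]: "det_value (INIT M)" by (simp add: INIT_def INITb_def)
lemma closed_TRANS[simp]: "closed_at n (TRANS M)"
  by (rule closed_at_mono[of 0]) (simp_all add: TRANS_def TRANSb_def)
lemma dv_TRANS[simp]: "det_value (TRANS M)" by (simp add: TRANS_def TRANSb_def)

lemma hstep_DEC[simp]: "hstep (App DECt v) = (if det_value v then Some (subst DECb 0 v) else None)"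
  by (simp add: DECt_def)
lemma hstep_INC[simp]: "hstep (App INCt v) = (if det_value v then Some (subst INCb 0 v) else None)"
  by (simp add: INCt_def)
lemma hstep_SPLIT[simp]: "hstep (App SPLITt v) = (if det_value v then Some (subst SPLITb 0 v) else None)"
  by (simp add: SPLITt_def)
lemma hstep_MI[simp]: "hstep (App (MI d b) v) = (if det_value v then Some (subst (MIb d b) 0 v) else None)"
  by (simp add: MI_def)
lemma hstep_MW[simp]: "hstep (App (MW mu a) v) = (if det_value v then Some (subst (MWb mu a) 0 v) else None)"
  by (simp add: MW_def)
lemma hstep_LSOME[simp]: "hstep (App (LSOME d b a mu s) v) = (if det_value v then Some (subst (LSOMEb d b a mu s) 0 v) else None)"
  by (simp add: LSOME_def)
lemma hstep_LNONE[simp]: "hstep (App LNONE v) = (if det_value v then Some (subst LNONEb 0 v) else None)"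
  by (simp add: LNONE_def)
lemma hstep_AT[simp]: "hstep (App (AT M s a) v) = (if det_value v then Some (subst (ATb M s a) 0 v) else None)"
  by (simp add: AT_def)
lemma hstep_BRN[simp]: "hstep (App (BRN M s) v) = (if det_value v then Some (subst (BRNb M s) 0 v) else None)"
  by (simp add: BRN_def)
lemma hstep_BRF[simp]: "hstep (App (BRF s) v) = (if det_value v then Some (subst (BRFb s) 0 v) else None)"
  by (simp add: BRF_def)
lemma hstep_LOOP[simp]: "hstep (App (LOOP M) v) = (if det_value v then Some (subst (LOOPb M) 0 v) else None)"
  by (simp add: LOOP_def)
lemma hstep_INIT[simp]: "hstep (App (INIT M) v) = (if det_value v then Some (subst (INITb M) 0 v) else None)"
  by (simp add: INIT_def)
lemma hstep_TRANS[simp]: "hstep (App (TRANS M) v) = (if det_value v then Some (subst (TRANSb M) 0 v) else None)"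
  by (simp add: TRANS_def)


lemma bin_pos: "n > 0 \<Longrightarrow> bin n = (n mod 2) # bin (n div 2)"
  by (simp add: bin.simps)

lemma bin_0[simp]: "bin 0 = []" by (simp add: bin.simps)

lemma closed_Suc[simp]: "closed_at 0 t \<Longrightarrow> closed_at (Suc n) t"
  by (erule closed_at_mono) simp

lemma bin_1[simp]: "bin (Suc 0) = [1]" by (simp add: bin.simps)

abbreviation B2 :: "nat \<Rightarrow> dterm" where "B2 n \<equiv> enc_str 2 (map Suc (bin n))"

lemma DEC_red:
  assumes K: "closed_at 0 K" "det_value K"
  shows "red (10 * length (bin n) + 10) (apps DECt [DECt, B2 n, K]) (App K (B2 (n - 1)))"
  using K
proof (induction n arbitrary: K rule: less_induct)
  case (less n)
  show ?case
  proof (cases "n = 0")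
    case True
    then show ?thesis using less.prems
      by (intro red_hsteps[where m=8]) (simp_all add: DECb_def)
  next
    case False
    note b = bin_pos[OF _]
    show ?thesis
    proof (cases "n mod 2 = 0")
      case True
      define K' where "K' = Lam (App K (Lam (Lam (Lam (App (Var 1) (Var 3))))))"
      have K': "closed_at 0 K'" "det_value K'" using less.prems by (simp_all add: K'_def)
      have h: "n div 2 > 0" "n div 2 < n" using False True by auto
      have r1: "red 9 (apps DECt [DECt, B2 n, K]) (apps DECt [DECt, B2 (n div 2), K'])"
        using less.prems False True
        by (intro red_hsteps[where m=9]) (simp_all add: DECb_def bin_pos[of n] K'_def)
      have r2: "red (10 * length (bin (n div 2)) + 10) (apps DECt [DECt, B2 (n div 2), K']) (App K' (B2 (n div 2 - 1)))"
        using less.IH[OF h(2) K'] .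
      have e: "(n - 1) mod 2 = 1" "(n - 1) div 2 = n div 2 - 1" "n - 1 > 0" using False True by presburger+
      have bn: "bin (n - Suc 0) = 1 # bin (n div 2 - Suc 0)"
        using e by (subst bin_pos) auto
      have r3: "red 1 (App K' (B2 (n div 2 - 1))) (App K (B2 (n - 1)))"
        using less.prems by (intro red_hsteps[where m=1]) (simp_all add: K'_def bn)
      have "9 + (10 * length (bin (n div 2)) + 10) + 1 \<le> 10 * length (bin n) + 10"
        using False by (simp add: bin_pos[of n])
      then show ?thesis by (rule red_mono[OF red_trans[OF red_trans[OF r1 r2] r3]])
    next
      case odd: False
      have "n - Suc 0 = 2 * (n div 2)" using odd by presburger
      then have bn: "bin (n - Suc 0) = bin (2 * (n div 2))" by simp
      show ?thesis
      proof (cases "n div 2 = 0")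
        case True
        then have "n = 1" using odd by presburger
        then show ?thesis using less.prems
          by (intro red_hsteps[where m=14]) (simp_all add: DECb_def bin_pos[of 1])
      next
        case pos: False
        have bn2: "bin (2 * (n div 2)) = 0 # bin (n div 2)" using pos by (subst bin_pos) auto
        have bq: "bin (n div 2) = (n div 2 mod 2) # bin (n div 2 div 2)" using pos by (intro bin_pos) simp
        show ?thesis
        proof (cases "n div 2 mod 2 = 0")
          case True
          then show ?thesis using less.prems odd False
            by (intro red_hsteps[where m=15]) (simp_all add: DECb_def bn bn2 bq bin_pos[of n])
        next
          case False
          then have "n div 2 mod 2 = 1" by presburger
          then show ?thesis using less.prems odd pos
            by (intro red_hsteps[where m=15]) (simp_all add: DECb_def bn bn2 bq bin_pos[of n])
        qed
      qed
    qed
  qed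
qed

lemma INC_red:
  assumes K: "closed_at 0 K" "det_value K"
  shows "red (10 * length (bin n) + 10) (apps INCt [INCt, B2 n, K]) (App K (B2 (Suc n)))"
  using K
proof (induction n arbitrary: K rule: less_induct)
  case (less n)
  show ?case
  proof (cases "n = 0")
    case True
    then show ?thesis using less.prems
      by (intro red_hsteps[where m=8]) (simp_all add: INCb_def)
  next
    case False
    show ?thesis
    proof (cases "n mod 2 = 0")
      case True
      have e: "Suc n mod 2 = 1" "Suc n div 2 = n div 2" using True by presburger+
      then have bn: "bin (Suc n) = 1 # bin (n div 2)" by (subst bin_pos) auto
      show ?thesis using less.prems False True
        by (intro red_hsteps[where m=9]) (simp_all add: INCb_def bin_pos[of n] bn)
    next
      case odd: False
      define K' where "K' = Lam (App K (Lam (Lam (Lam (App (Var 2) (Var 3))))))"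
      have K': "closed_at 0 K'" "det_value K'" using less.prems by (simp_all add: K'_def)
      have h: "n div 2 < n" using False by auto
      have r1: "red 9 (apps INCt [INCt, B2 n, K]) (apps INCt [INCt, B2 (n div 2), K'])"
        using less.prems False odd
        by (intro red_hsteps[where m=9]) (simp_all add: INCb_def bin_pos[of n] K'_def)
      have r2: "red (10 * length (bin (n div 2)) + 10) (apps INCt [INCt, B2 (n div 2), K']) (App K' (B2 (Suc (n div 2))))"
        using less.IH[OF h K'] .
      have e: "Suc n mod 2 = 0" "Suc n div 2 = Suc (n div 2)" using odd by presburger+
      have bn: "bin (Suc n) = 0 # bin (Suc (n div 2))"
        using e by (subst bin_pos) auto
      have r3: "red 1 (App K' (B2 (Suc (n div 2)))) (App K (B2 (Suc n)))"
        using less.prems by (intro red_hsteps[where m=1]) (simp_all add: K'_def bn)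
      have "9 + (10 * length (bin (n div 2)) + 10) + 1 \<le> 10 * length (bin n) + 10"
        using False by (simp add: bin_pos[of n])
      then show ?thesis by (rule red_mono[OF red_trans[OF red_trans[OF r1 r2] r3]])
    qed
  qed
qed


abbreviation E4 :: "binI list \<Rightarrow> dterm" where "E4 l \<equiv> enc_str 4 (map idxI l)"

lemma length_bin: "length (bin n) = (if n = 0 then 0 else Suc (length (bin (n div 2))))"
  by (simp add: bin_pos)

lemma bin_len_mono: "m \<le> n \<Longrightarrow> length (bin m) \<le> length (bin n)"
proof (induction n arbitrary: m rule: less_induct)
  case (less n)
  show ?case
  proof (cases "m = 0")
    case True then show ?thesis by simp
  next
    case False
    then have "m div 2 \<le> n div 2" "n div 2 < n" using less.prems by (auto simp: div_le_mono)
    then have "length (bin (m div 2)) \<le> length (bin (n div 2))" using less.IH by blast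
    then show ?thesis using False less.prems by (subst (1 2) length_bin) auto
  qed
qed

lemma SPLIT_red:
  assumes "p \<le> length zr" "length (bin p) \<le> Lb" "closed_at 0 K" "det_value K"
  shows "red (p * (35 + 10 * Lb) + 13) (apps SPLITt [SPLITt, B2 p, E4 zl, E4 zr, K])
           (apps K [E4 (rev (take p zr) @ zl), E4 (drop p zr)])"
  using assms
proof (induction p arbitrary: zl zr)
  case 0
  then show ?case by (intro red_hsteps[where m=13]) (simp_all add: SPLITb_def)
next
  case (Suc p)
  then obtain x rest where zr: "zr = x # rest" by (cases zr) auto
  define K1 where "K1 = Lam (App (App (App (App (App (App (App (App (App (E4 zr) (Lam (Lam (Lam (Lam (Lam (App (App (App (App (App (Var 3) (Var 3)) (Var 2)) (Lam (Lam (Lam (Lam (Lam (App (Var 4) (Var 6)))))))) (Var 4)) (Var 0)))))))) (Lam (Lam (Lam (Lam (Lam (App (App (App (App (App (Var 3) (Var 3)) (Var 2)) (Lam (Lam (Lam (Lam (Lam (App (Var 3) (Var 6)))))))) (Var 4)) (Var 0)))))))) (Lam (Lam (Lam (Lam (Lam (App (App (App (App (App (Var 3) (Var 3)) (Var 2)) (Lam (Lam (Lam (Lam (Lam (App (Var 2) (Var 6)))))))) (Var 4)) (Var 0)))))))) (Lam (Lam (Lam (Lam (Lam (App (App (App (App (App (Var 3) (Var 3)) (Var 2)) (Lam (Lam (Lam (Lam (Lam (App (Var 1) (Var 6)))))))) (Var 4)) (Var 0)))))))) (Lam (Lam (Lam (Lam (App (App (Var 0) (Var 1)) (enc_str 4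 []))))))) (SPLITt)) (Var 0)) (E4 zl)) (K))"
  have K1: "closed_at 0 K1" "det_value K1" using Suc.prems by (simp_all add: K1_def)
  have r1: "red 14 (apps SPLITt [SPLITt, B2 (Suc p), E4 zl, E4 zr, K]) (apps DECt [DECt, B2 (Suc p), K1])"
  proof (cases "Suc p mod 2 = 0")
    case True then show ?thesis using Suc.prems
      by (intro red_hsteps[where m=14]) (simp_all add: SPLITb_def K1_def bin_pos[of "Suc p"])
  next
    case False then have "Suc p mod 2 = 1" by presburger
    then show ?thesis using Suc.prems
      by (intro red_hsteps[where m=14]) (simp_all add: SPLITb_def K1_def bin_pos[of "Suc p"])
  qed
  have r2: "red (10 * Lb + 10) (apps DECt [DECt, B2 (Suc p), K1]) (App K1 (B2 p))"
    using DEC_red[OF K1, of "Suc p"] Suc.prems(2) by (auto elim: red_mono)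
  have r3: "red 11 (App K1 (B2 p)) (apps SPLITt [SPLITt, B2 p, E4 (x # zl), E4 rest, K])"
    using Suc.prems by (cases x) (intro red_hsteps[where m=11]; simp add: K1_def zr)+
  have "length (bin p) \<le> Lb" using bin_len_mono[of p "Suc p"] Suc.prems(2) by simp
  then have r4: "red (p * (35 + 10 * Lb) + 13) (apps SPLITt [SPLITt, B2 p, E4 (x # zl), E4 rest, K])
           (apps K [E4 (rev (take p rest) @ (x # zl)), E4 (drop p rest)])"
    using Suc.IH[of rest "x # zl"] Suc.prems zr by simp
  have "14 + (10 * Lb + 10) + 11 + (p * (35 + 10 * Lb) + 13) \<le> Suc p * (35 + 10 * Lb) + 13" by simp
  from red_mono[OF red_trans[OF red_trans[OF red_trans[OF r1 r2] r3] r4] this]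
  show ?case unfolding zr by simp
qed


abbreviation E3 :: "binW list \<Rightarrow> dterm" where "E3 l \<equiv> enc_str 3 (map idxW l)"
abbreviation C3 :: "binW \<Rightarrow> dterm" where "C3 x \<equiv> enc_char 3 (idxW x)"

lemma MI_p1_red:
  assumes "closed_at 0 K" "det_value K"
  shows "red (10 * length (bin n) + 15) (apps (MI 1 b) [E4 zl, E4 rest, B2 n, K]) (apps K [E4 (b # zl), E4 rest, B2 (Suc n)])"
proof -
  define K' where "K' = Lam (App (App (App (K) (Lam (Lam (Lam (Lam (Lam (App (Var (5 - idxI b)) ((E4 zl))))))))) ((E4 rest))) (Var 0))"
  have K': "closed_at 0 K'" "det_value K'" using assms by (cases b; simp add: K'_def)+
  have r1: "red 4 (apps (MI 1 b) [E4 zl, E4 rest, B2 n, K]) (apps INCt [INCt, B2 n, K'])"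
    using assms by (cases b; intro red_hsteps[where m=4]; simp add: MIb_def MIpb_def K'_def)
  have r3: "red 1 (App K' (B2 (Suc n))) (apps K [E4 (b # zl), E4 rest, B2 (Suc n)])"
    using assms by (cases b; intro red_hsteps[where m=1]; simp add: K'_def)
  show ?thesis by (rule red_mono[OF red_trans[OF red_trans[OF r1 INC_red[OF K']] r3]]) simp
qed

lemma MI_0_red:
  assumes "closed_at 0 K" "det_value K"
  shows "red 4 (apps (MI 0 b) [E4 zl, E4 rest, B2 n, K]) (apps K [E4 zl, E4 (b # rest), B2 n])"
  using assms by (cases b; intro red_hsteps[where m=4]; simp add: MIb_def MIzb_def)

lemma MI_m1_red:
  assumes "closed_at 0 K" "det_value K" "d \<noteq> 0" "d \<noteq> 1"
  shows "red (10 * length (bin n) + 24) (apps (MI d b) [E4 (c # zl), E4 rest, B2 n, K]) (apps K [E4 zl, E4 (c # b # rest), B2 (n - 1)])"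
proof -
  define K' where "K' = Lam (App (App (App (App (App (App (App (App ((E4 (c # zl))) (Lam (Lam (Lam (Lam (App (App (App (Var 0) (Var 3)) (Lam (Lam (Lam (Lam (Lam (App (Var 4) (Lam (Lam (Lam (Lam (Lam (App (Var (5 - idxI b)) (Var 12)))))))))))))) (Var 1))))))) (Lam (Lam (Lam (Lam (App (App (App (Var 0) (Var 3)) (Lam (Lam (Lam (Lam (Lam (App (Var 3) (Lam (Lam (Lam (Lam (Lam (App (Var (5 - idxI b)) (Var 12)))))))))))))) (Var 1))))))) (Lam (Lam (Lam (Lam (App (App (App (Var 0) (Var 3)) (Lam (Lam (Lam (Lam (Lam (App (Var 2) (Lam (Lam (Lam (Lam (Lam (App (Var (5 - idxI b)) (Var 12)))))))))))))) (Var 1))))))) (Lam (Lam (Lam (Lam (App (App (App (Var 0) (Var 3)) (Lam (Lam (Lam (Lam (Lam (App (Var 1) (Lam (Lam (Lam (Lam (Lam (App (Var (5 - idxI b)) (Var 12)))))))))))))) (Var 1))))))) (Lam (Lam (Lam (App (App (App (Var 0) (enc_str 4 [])) (Var 2)) (Var 1)))))) ((E4 rest))) (Var 0)) (K))"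
  have K': "closed_at 0 K'" "det_value K'" using assms by (cases b; simp add: K'_def del: enc_str.simps)+
  have md: "MI d b = Lam (MImb b)" using assms by (simp add: MI_def MIb_def)
  have r1: "red 4 (apps (MI d b) [E4 (c # zl), E4 rest, B2 n, K]) (apps DECt [DECt, B2 n, K'])"
    unfolding md using assms by (cases b; intro red_hsteps[where m=4]; simp add: MImb_def K'_def del: enc_str.simps)
  have r3: "red 10 (App K' (B2 (n - 1))) (apps K [E4 zl, E4 (c # b # rest), B2 (n - 1)])"
    using assms by (cases b; cases c; intro red_hsteps[where m=10]; simp add: K'_def)
  show ?thesis by (rule red_mono[OF red_trans[OF red_trans[OF r1 DEC_red[OF K']] r3]]) simp
qed

lemma MW_red:
  assumes "closed_at 0 K" "det_value K"
  shows "red 10 (apps (MW mu a) [E3 (rev wl), E3 wr, K])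
     (case move_work mu wl a wr of (wl', a', wr') \<Rightarrow> apps K [E3 (rev wl'), C3 a', E3 wr'])"
proof (cases mu)
  case MStay
  then show ?thesis using assms by (cases a; intro red_hsteps[where m=3]; simp add: MWb_def MW_def)
next
  case MLeft
  show ?thesis
  proof (cases "rev wl")
    case Nil
    then show ?thesis using assms MLeft by (cases a; intro red_hsteps[where m=9]; simp add: MWb_def MW_def)
  next
    case (Cons x r)
    have "wl = rev (rev wl)" by simp
    then have "wl = rev r @ [x]" using Cons by simp
    then show ?thesis using assms MLeft by (cases a; cases x; intro red_hsteps[where m=10]; simp add: MWb_def MW_def)
  qed
next
  case MRight
  show ?thesis
  proof (cases wr)
    case Nil
    then show ?thesis using assms MRight by (cases a; intro red_hsteps[where m=9]; simp add: MWb_def MW_def)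
  next
    case (Cons x r)
    then show ?thesis using assms MRight by (cases a; cases x; intro red_hsteps[where m=10]; simp add: MWb_def MW_def)
  qed
qed


lemma idxW_le3[simp]: "idxW x \<le> 3" by (cases x) auto
lemma idxI_le4[simp]: "idxI x \<le> 4" by (cases x) auto

definition mvin :: "int \<Rightarrow> binI \<Rightarrow> binI list \<Rightarrow> binI list \<Rightarrow> nat \<Rightarrow> binI list \<times> binI list \<times> nat" where
  "mvin d b zl rest n = (if d = 1 then (b # zl, rest, Suc n) else if d = 0 then (zl, b # rest, n)
     else (tl zl, hd zl # b # rest, n - 1))"

lemma LSOME_red:
  assumes "d = 1 \<or> d = 0 \<or> (d = -1 \<and> zl \<noteq> [])"
  shows "red (10 * length (bin n) + 50) (apps (LSOME d b a mu s) [E4 rest, E4 ip, E4 zl, B2 n, E3 (rev wl), E3 wr, LOOP M])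
   (case mvin d b zl rest n of (zl', zr', n') \<Rightarrow> case move_work mu wl a wr of (wl2, a2, wr2) \<Rightarrow>
      apps (LOOP M) [LOOP M, E4 ip, E4 zl', E4 zr', B2 n', E3 (rev wl2), C3 a2, E3 wr2, encQ s])"
proof -
  obtain zl' zr' n' where mv: "mvin d b zl rest n = (zl', zr', n')" by (cases "mvin d b zl rest n") auto
  obtain wl2 a2 wr2 where mw: "move_work mu wl a wr = (wl2, a2, wr2)" by (cases "move_work mu wl a wr") auto
  define K1 where "K1 = Lam (Lam (Lam (App (App (App (MW mu a) ((E3 (rev wl)))) ((E3 wr))) (Lam (Lam (Lam (App (App (App (App (App (App (App (App (App (LOOP M) (LOOP M)) ((E4 ip))) (Var 5)) (Var 4)) (Var 3)) (Var 2)) (Var 1)) (Var 0)) ((encQ s)))))))))"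
  have K1: "closed_at 0 K1" "det_value K1" by (simp_all add: K1_def del: enc_str.simps)
  have r1: "red 7 (apps (LSOME d b a mu s) [E4 rest, E4 ip, E4 zl, B2 n, E3 (rev wl), E3 wr, LOOP M])
       (apps (MI d b) [E4 zl, E4 rest, B2 n, K1])"
    by (intro red_hsteps[where m=7]) (simp_all add: LSOMEb_def K1_def del: enc_str.simps)
  have r2: "red (10 * length (bin n) + 24) (apps (MI d b) [E4 zl, E4 rest, B2 n, K1]) (apps K1 [E4 zl', E4 zr', B2 n'])"
  proof -
    consider "d = 1" | "d = 0" | "d = -1" "zl \<noteq> []" using assms by blast
    then show ?thesis
    proof cases
      case 1 then show ?thesis using mv MI_p1_red[OF K1, of n b zl rest]
        by (auto simp: mvin_def elim: red_mono)
    next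
      case 2 then show ?thesis using mv MI_0_red[OF K1, of b zl rest n]
        by (auto simp: mvin_def elim: red_mono)
    next
      case 3
      then obtain c zl0 where zl: "zl = c # zl0" by (cases zl) auto
      show ?thesis using 3 mv MI_m1_red[OF K1, of d n b c zl0 rest] zl
        by (auto simp: mvin_def)
    qed
  qed
  define K2 where "K2 = Lam (Lam (Lam (App (App (App (App (App (App (App (App (App (LOOP M) (LOOP M)) ((E4 ip))) ((E4 zl'))) ((E4 zr'))) ((B2 n'))) (Var 2)) (Var 1)) (Var 0)) ((encQ s)))))"
  have K2: "closed_at 0 K2" "det_value K2" by (simp_all add: K2_def del: enc_str.simps)
  have r3: "red 3 (apps K1 [E4 zl', E4 zr', B2 n']) (apps (MW mu a) [E3 (rev wl), E3 wr, K2])"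
    by (intro red_hsteps[where m=3]) (simp_all add: K1_def K2_def del: enc_str.simps)
  have r4: "red 10 (apps (MW mu a) [E3 (rev wl), E3 wr, K2]) (apps K2 [E3 (rev wl2), C3 a2, E3 wr2])"
    using MW_red[OF K2, of mu a wl wr] mw by simp
  have r5: "red 3 (apps K2 [E3 (rev wl2), C3 a2, E3 wr2])
     (apps (LOOP M) [LOOP M, E4 ip, E4 zl', E4 zr', B2 n', E3 (rev wl2), C3 a2, E3 wr2, encQ s])"
    by (intro red_hsteps[where m=3]) (simp_all add: K2_def del: enc_str.simps)
  have "7 + (10 * length (bin n) + 24) + 3 + 10 + 3 \<le> 10 * length (bin n) + 50" by simp
  from red_mono[OF red_trans[OF red_trans[OF red_trans[OF red_trans[OF r1 r2] r3] r4] r5] this]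
  show ?thesis using mv mw by simp
qed


lemma sorted_idxQ: "sorted_list_of_set (UNIV::'q::{finite,linorder} set) ! (idxQ s - 1) = s"
proof -
  define xs where "xs = sorted_list_of_set (UNIV::'q set)"
  have d: "distinct xs" and st: "sorted_wrt (<) xs" and st2: "sorted xs" and S: "set xs = UNIV"
    by (simp_all add: xs_def strict_sorted_list_of_set)
  obtain i where i: "i < length xs" "xs ! i = s" using S by (metis UNIV_I in_set_conv_nth)
  have "{q. q \<le> s} = set (take (Suc i) xs)"
  proof (intro set_eqI iffI)
    fix q assume q: "q \<in> {q. q \<le> s}"
    obtain j where j: "j < length xs" "xs ! j = q" using S by (metis UNIV_I in_set_conv_nth)
    have "j \<le> i"
    proof (rule ccontr)
      assume "\<not> j \<le> i"
      then have "xs ! i < xs ! j" using sorted_wrt_nth_less[OF st, of i j] j by simp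
      then show False using q i j by simp
    qed
    then show "q \<in> set (take (Suc i) xs)" using j by (auto simp: in_set_conv_nth)
  next
    fix q assume "q \<in> set (take (Suc i) xs)"
    then obtain j where j: "j < length (take (Suc i) xs)" "take (Suc i) xs ! j = q" by (auto simp: in_set_conv_nth)
    then have "j \<le> i" "xs ! j = q" by auto
    then show "q \<in> {q. q \<le> s}" using sorted_nth_mono[OF st2, of j i] i by simp
  qed
  then have "idxQ s = Suc i" unfolding idxQ_def using d i distinct_card[of "take (Suc i) xs"] by simp
  then show ?thesis using i by (simp add: xs_def)
qed

lemma AT_red:
  "red 12 (apps (AT M s a) [E4 ip, E4 zl, E4 (b # rest), B2 n, E3 (rev wl), E3 wr, LOOP M])
     (apps (L M s a b) [E4 rest, E4 ip, E4 zl, B2 n, E3 (rev wl), E3 wr, LOOP M])"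
  by (cases b; intro red_hsteps[where m=12]; simp add: ATb_def)

lemma BRN_red:
  "red 11 (apps (BRN M s) [E4 ip, E4 zl, E4 zr, B2 n, E3 (rev wl), C3 a, E3 wr, LOOP M])
     (apps (AT M s a) [E4 ip, E4 zl, E4 zr, B2 n, E3 (rev wl), E3 wr, LOOP M])"
  by (cases a; intro red_hsteps[where m=11]; simp add: BRNb_def enc_char_def del: enc_str.simps)

lemma BRF_red:
  "red 8 (apps (BRF s) [E4 ip, E4 zl, E4 zr, B2 n, E3 (rev wl), C3 a, E3 wr, LOOP M])
     (Lam (App (Var 0) (Lam (apps (Var 0) [E4 ip, B2 n, E3 (rev wl), C3 a, E3 wr, encQ s]))))"
  by (intro red_hsteps[where m=8]) (simp_all add: BRFb_def del: enc_str.simps)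

lemma LNONE_red:
  "red 7 (apps LNONE [E4 rest, E4 ip, E4 zl, B2 n, E3 (rev wl), E3 wr, LOOP M])
     (App (Lam (App (Var 0) (Var 0))) (Lam (App (Var 0) (Var 0))))"
  by (intro red_hsteps[where m=7]) (simp_all add: LNONEb_def del: enc_str.simps)

lemma OMEGA_div: "diverges (App (Lam (App (Var 0) (Var 0))) (Lam (App (Var 0) (Var 0))))"
  by (rule diverges_intro[where Q="\<lambda>t. t = App (Lam (App (Var 0) (Var 0))) (Lam (App (Var 0) (Var 0)))"])
     (auto intro: hstep_sound)

lemma length_BRs: "length (BRs (M :: 'q::{finite,linorder} tm)) = card (UNIV :: 'q set)"
  by (simp add: BRs_def)

lemma BRs_nth: "BRs M ! (idxQ s - Suc 0) = BR M (s::'q::{finite,linorder})"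
proof -
  have "idxQ s - 1 < card (UNIV :: 'q set)" using idxQ_pos[of s] idxQ_le[of s] by linarith
  then show ?thesis unfolding BRs_def using sorted_idxQ[of s] by simp
qed

definition LS :: "'q::{finite,linorder} tm \<Rightarrow> binI list \<Rightarrow> nat \<Rightarrow> binW list \<Rightarrow> binW \<Rightarrow> binW list \<Rightarrow> 'q \<Rightarrow> dterm" where
  "LS M ip p wl a wr s = apps (LOOP M) [LOOP M, E4 ip, E4 (rev (take p ip)), E4 (drop p ip), B2 p,
       E3 (rev wl), C3 a, E3 wr, encQ s]"

lemma LOOP_red:
  "red (9 + card (UNIV :: 'q set)) (LS M ip p wl a wr (s::'q::{finite,linorder}))
     (apps (BR M s) [E4 ip, E4 (rev (take p ip)), E4 (drop p ip), B2 p, E3 (rev wl), C3 a, E3 wr, LOOP M])"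
proof -
  let ?args = "[E4 ip, E4 (rev (take p ip)), E4 (drop p ip), B2 p, E3 (rev wl), C3 a, E3 wr, LOOP M]"
  have r1: "red 9 (LS M ip p wl a wr s) (apps (apps (encQ s) (BRs M)) ?args)"
    unfolding LS_def by (intro red_hsteps[where m=9]) (simp_all add: LOOPb_def del: enc_str.simps)
  have r2: "red (card (UNIV :: 'q set)) (apps (encQ s) (BRs M)) (BR M s)"
    unfolding encQ_def using enc_char_red[of "BRs M" "card (UNIV :: 'q set)" "idxQ s"]
      idxQ_pos[of s] idxQ_le[of s] by (simp add: length_BRs BRs_nth)
  have r2': "red (card (UNIV :: 'q set)) (apps (apps (encQ s) (BRs M)) ?args) (apps (BR M s) ?args)"
    by (rule red_apps[OF r2]) simp
  show ?thesis using red_trans[OF r1 r2'] by simp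
qed


definition redp :: "nat \<Rightarrow> dterm \<Rightarrow> dterm \<Rightarrow> bool" where
  "redp n t t' = (\<exists>m. 0 < m \<and> m \<le> n \<and> (det_step ^^ m) t t')"

lemma redp_red: "redp n t t' \<Longrightarrow> red n t t'"
  unfolding redp_def red_def by blast

lemma redp_trans: "redp a t u \<Longrightarrow> red b u v \<Longrightarrow> redp (a + b) t v"
  unfolding redp_def red_def
  by (metis add_le_mono add_pos_nonneg le0 steps_trans)

lemma redp_mono: "redp a t u \<Longrightarrow> a \<le> b \<Longrightarrow> redp b t u"
  unfolding redp_def using order.trans by blast

lemma redp_hsteps: "hsteps m t = Some t' \<Longrightarrow> 0 < m \<Longrightarrow> m \<le> n \<Longrightarrow> redp n t t'"
  unfolding redp_def using hsteps_sound by blast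

lemma redp_App: "redp n t t' \<Longrightarrow> det_value v \<Longrightarrow> redp n (App t v) (App t' v)"
  unfolding redp_def using steps_ctx by blast

lemma LOOP_redp:
  "redp (9 + card (UNIV :: 'q set)) (LS M ip p wl a wr (s::'q::{finite,linorder}))
     (apps (BR M s) [E4 ip, E4 (rev (take p ip)), E4 (drop p ip), B2 p, E3 (rev wl), C3 a, E3 wr, LOOP M])"
proof -
  let ?args = "[E4 ip, E4 (rev (take p ip)), E4 (drop p ip), B2 p, E3 (rev wl), C3 a, E3 wr, LOOP M]"
  have r1: "redp 9 (LS M ip p wl a wr s) (apps (apps (encQ s) (BRs M)) ?args)"
    unfolding LS_def by (intro redp_hsteps[where m=9]) (simp_all add: LOOPb_def del: enc_str.simps)
  have r2: "red (card (UNIV :: 'q set)) (apps (encQ s) (BRs M)) (BR M s)"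
    unfolding encQ_def using enc_char_red[of "BRs M" "card (UNIV :: 'q set)" "idxQ s"]
      idxQ_pos[of s] idxQ_le[of s] by (simp add: length_BRs BRs_nth)
  have r2': "red (card (UNIV :: 'q set)) (apps (apps (encQ s) (BRs M)) ?args) (apps (BR M s) ?args)"
    by (rule red_apps[OF r2]) simp
  show ?thesis using redp_trans[OF r1 r2'] by simp
qed

definition LSC :: "'q::{finite,linorder} tm \<Rightarrow> 'q config \<Rightarrow> dterm" where
  "LSC M C = LS M (inp C) (pos C) (wleft C) (cur C) (wright C) (state C)"

lemma valid_input_len: "valid_input i \<Longrightarrow> 2 \<le> length i"
  unfolding valid_input_def by auto

lemma step_sim:
  fixes M :: "'q::{finite,linorder} tm"
  assumes wf: "wf_tm M" and st: "stays_on_input M" and cf: "is_config C" and ts: "tm_step M C D"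
  shows "redp (10 * length (bin (pos C)) + card (UNIV :: 'q set) + 82) (LSC M C) (LSC M D)
     \<and> is_config D \<and> inp D = inp C"
proof -
  from ts obtain d a' mu s' wl a wr where
    nf: "\<not> is_final M C" and pl: "pos C < length (inp C)" and
    dl: "delta M (inp C ! pos C) (cur C) (state C) = Some (d, a', mu, s')" and
    nn: "0 \<le> int (pos C) + d" and mw: "move_work mu (wleft C) a' (wright C) = (wl, a, wr)" and
    D: "D = \<lparr>inp = inp C, pos = nat (int (pos C) + d), wleft = wl, cur = a, wright = wr, state = s'\<rparr>"
    by (cases rule: tm_step.cases) auto
  define ip where "ip = inp C"
  define p where "p = pos C"
  define b where "b = ip ! p"
  define rest where "rest = drop (Suc p) ip"
  define p' where "p' = nat (int p + d)"
  have pl': "p < length ip" using pl by (simp add: ip_def p_def)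
  have zr: "drop p ip = b # rest" using pl' by (simp add: b_def rest_def Cons_nth_drop_Suc)
  have d3: "d \<in> {-1, 0, 1}" using wf dl unfolding wf_tm_def by blast
  have vi: "valid_input ip" using cf by (simp add: is_config_def ip_def)
  have bd: "0 \<le> int p + d \<and> int p + d < int (length ip)"
    using st vi pl' dl unfolding stays_on_input_def ip_def p_def b_def by blast
  have sfin: "state C \<notin> {s_T M, s_F M}" using nf by (simp add: is_final_def)
  let ?s = "state C"
  have r1: "redp (9 + card (UNIV :: 'q set)) (LSC M C)
     (apps (BRN M ?s) [E4 ip, E4 (rev (take p ip)), E4 (b # rest), B2 p, E3 (rev (wleft C)), C3 (cur C), E3 (wright C), LOOP M])"
    using LOOP_redp[of M ip p "wleft C" "cur C" "wright C" ?s] sfin zr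
    by (simp add: LSC_def ip_def p_def BR_def)
  have r2: "red 11 (apps (BRN M ?s) [E4 ip, E4 (rev (take p ip)), E4 (b # rest), B2 p, E3 (rev (wleft C)), C3 (cur C), E3 (wright C), LOOP M])
     (apps (AT M ?s (cur C)) [E4 ip, E4 (rev (take p ip)), E4 (b # rest), B2 p, E3 (rev (wleft C)), E3 (wright C), LOOP M])"
    by (rule BRN_red)
  have r3: "red 12 (apps (AT M ?s (cur C)) [E4 ip, E4 (rev (take p ip)), E4 (b # rest), B2 p, E3 (rev (wleft C)), E3 (wright C), LOOP M])
     (apps (L M ?s (cur C) b) [E4 rest, E4 ip, E4 (rev (take p ip)), B2 p, E3 (rev (wleft C)), E3 (wright C), LOOP M])"
    by (rule AT_red)
  have Leq: "L M ?s (cur C) b = LSOME d b a' mu s'"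
    using dl by (simp add: L_def b_def ip_def p_def)
  have pre: "d = 1 \<or> d = 0 \<or> (d = -1 \<and> rev (take p ip) \<noteq> [])"
    using d3 bd pl' by auto
  have mv: "mvin d b (rev (take p ip)) rest p = (rev (take p' ip), drop p' ip, p')"
  proof -
    consider "d = 1" | "d = 0" | "d = -1" using d3 by blast
    then show ?thesis
    proof cases
      case 1
      then have "p' = Suc p" by (simp add: p'_def)
      then show ?thesis using 1 pl' by (simp add: mvin_def b_def rest_def take_Suc_conv_app_nth)
    next
      case 2
      then have "p' = p" by (simp add: p'_def)
      then show ?thesis using 2 zr by (simp add: mvin_def)
    next
      case 3
      then obtain q where q: "p = Suc q" using bd by (cases p) auto
      then have "p' = q" using 3 by (simp add: p'_def)
      moreover have "drop q ip = ip ! q # drop (Suc q) ip" using pl' q by (simp add: Cons_nth_drop_Suc)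
      then have "drop q ip = ip ! q # b # rest" using q zr by simp
      ultimately show ?thesis using 3 q pl' by (simp add: mvin_def take_Suc_conv_app_nth)
    qed
  qed
  have r4: "red (10 * length (bin p) + 50) (apps (L M ?s (cur C) b) [E4 rest, E4 ip, E4 (rev (take p ip)), B2 p, E3 (rev (wleft C)), E3 (wright C), LOOP M])
     (LSC M D)"
    using LSOME_red[where d=d and zl="rev (take p ip)" and n=p and b=b and a=a' and mu=mu and s=s'
        and rest=rest and ip=ip and wl="wleft C" and wr="wright C" and M=M, OF pre] mv mw
    by (simp add: Leq LSC_def LS_def D p'_def ip_def p_def)
  have "9 + card (UNIV :: 'q set) + 11 + 12 + (10 * length (bin p) + 50) \<le> 10 * length (bin (pos C)) + card (UNIV :: 'q set) + 82"
    by (simp add: p_def)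
  then have "redp (10 * length (bin (pos C)) + card (UNIV :: 'q set) + 82) (LSC M C) (LSC M D)"
    by (rule redp_mono[OF redp_trans[OF redp_trans[OF redp_trans[OF r1 r2] r3] r4]])
  moreover have "is_config D" using vi bd by (simp add: is_config_def D ip_def p_def nat_less_iff)
  ultimately show ?thesis by (simp add: D)
qed


lemma enc_config_eq: "enc_config C = Lam (apps (Var 0) [E4 (inp C), B2 (pos C), E3 (rev (wleft C)), C3 (cur C), E3 (wright C), encQ (state C)])"
  by (simp add: enc_config_def encQ_def)

lemma closed_enc_config[simp]: "closed_at n (enc_config C)"
  by (simp add: enc_config_eq del: enc_str.simps)

lemma dv_enc_config[simp]: "det_value (enc_config C)"
  by (simp add: enc_config_eq del: enc_str.simps)

lemma final_sim:
  fixes M :: "'q::{finite,linorder} tm"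
  assumes "is_final M C" "det_value k"
  shows "red (card (UNIV :: 'q set) + 18) (App (LSC M C) k) (App k (enc_config C))"
proof -
  let ?args = "[E4 (inp C), E4 (rev (take (pos C) (inp C))), E4 (drop (pos C) (inp C)), B2 (pos C),
      E3 (rev (wleft C)), C3 (cur C), E3 (wright C), LOOP M]"
  have r1: "red (9 + card (UNIV :: 'q set)) (LSC M C) (apps (BRF (state C)) ?args)"
    using redp_red[OF LOOP_redp[of M "inp C" "pos C" "wleft C" "cur C" "wright C" "state C"]] assms(1)
    by (simp add: LSC_def BR_def is_final_def)
  have r2: "red 8 (apps (BRF (state C)) ?args)
     (Lam (App (Var 0) (Lam (apps (Var 0) [E4 (inp C), B2 (pos C), E3 (rev (wleft C)), C3 (cur C), E3 (wright C), encQ (state C)]))))"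
    by (rule BRF_red)
  have r3: "red 1 (App (Lam (App (Var 0) (Lam (apps (Var 0) [E4 (inp C), B2 (pos C), E3 (rev (wleft C)), C3 (cur C), E3 (wright C), encQ (state C)])))) k)
     (App k (enc_config C))"
    using assms(2) by (intro red_hsteps[where m=1]) (simp_all add: enc_config_eq del: enc_str.simps)
  show ?thesis using red_trans[OF red_App[OF red_trans[OF r1 r2] assms(2)] r3] by (simp add: add.commute)
qed

lemma OMEGA_value: "det_value (Lam (App (Var 0) (Var 0)))" by simp

lemma stuck_div:
  fixes M :: "'q::{finite,linorder} tm"
  assumes cf: "is_config C" and nf: "\<not> is_final M C" and dl: "delta M (inp C ! pos C) (cur C) (state C) = None"
    and k: "det_value k"
  shows "diverges (App (LSC M C) k)"
proof -
  define ip where "ip = inp C"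
  define p where "p = pos C"
  define b where "b = ip ! p"
  define rest where "rest = drop (Suc p) ip"
  have pl': "p < length ip" using cf by (simp add: ip_def p_def is_config_def)
  have zr: "drop p ip = b # rest" using pl' by (simp add: b_def rest_def Cons_nth_drop_Suc)
  have sfin: "state C \<notin> {s_T M, s_F M}" using nf by (simp add: is_final_def)
  let ?s = "state C"
  have r1: "red (9 + card (UNIV :: 'q set)) (LSC M C)
     (apps (BRN M ?s) [E4 ip, E4 (rev (take p ip)), E4 (b # rest), B2 p, E3 (rev (wleft C)), C3 (cur C), E3 (wright C), LOOP M])"
    using redp_red[OF LOOP_redp[of M ip p "wleft C" "cur C" "wright C" ?s]] sfin zr
    by (simp add: LSC_def ip_def p_def BR_def)
  have Leq: "L M ?s (cur C) b = LNONE"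
    using dl by (simp add: L_def b_def ip_def p_def)
  have r23: "red (9 + card (UNIV :: 'q set) + 11 + 12) (LSC M C)
     (apps LNONE [E4 rest, E4 ip, E4 (rev (take p ip)), B2 p, E3 (rev (wleft C)), E3 (wright C), LOOP M])"
    using red_trans[OF red_trans[OF r1 BRN_red] AT_red] Leq by simp
  have r: "red (9 + card (UNIV :: 'q set) + 11 + 12 + 7) (LSC M C) (App (Lam (App (Var 0) (Var 0))) (Lam (App (Var 0) (Var 0))))"
    using red_trans[OF r23 LNONE_red] .
  then obtain m where "(det_step ^^ m) (LSC M C) (App (Lam (App (Var 0) (Var 0))) (Lam (App (Var 0) (Var 0))))"
    unfolding red_def by blast
  then have "(det_step ^^ m) (App (LSC M C) k) (App (App (Lam (App (Var 0) (Var 0))) (Lam (App (Var 0) (Var 0)))) k)"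
    using k by (rule steps_ctx)
  moreover have "diverges (App (App (Lam (App (Var 0) (Var 0))) (Lam (App (Var 0) (Var 0)))) k)"
    using diverges_App[OF OMEGA_div k] .
  ultimately show ?thesis by (rule diverges_prefix)
qed

lemma init_sim:
  fixes M :: "'q::{finite,linorder} tm"
  assumes cf: "is_config C" and k: "det_value k"
  shows "red (pos C * (35 + 10 * length (bin (pos C))) + 24) (App (App (TRANS M) k) (enc_config C)) (App (LSC M C) k)"
proof -
  define K0 where "K0 = Lam (Lam (App (App (App (App (App (App (App (App (App (LOOP M) (LOOP M)) ((E4 (inp C)))) (Var 1)) (Var 0)) ((B2 (pos C)))) ((E3 (rev (wleft C))))) ((C3 (cur C)))) ((E3 (wright C)))) ((encQ (state C)))))"
  have K0: "closed_at 0 K0" "det_value K0" by (simp_all add: K0_def del: enc_str.simps)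
  have i1: "red 2 (App (App (TRANS M) k) (enc_config C)) (App (App (enc_config C) (INIT M)) k)"
    using k by (intro red_hsteps[where m=2]) (simp_all add: TRANSb_def)
  have i2: "red 7 (App (enc_config C) (INIT M)) (apps SPLITt [SPLITt, B2 (pos C), E4 [], E4 (inp C), K0])"
    unfolding enc_config_eq by (intro red_hsteps[where m=7]) (simp_all add: INITb_def K0_def del: enc_str.simps)
  have pl: "pos C \<le> length (inp C)" using cf by (simp add: is_config_def)
  have i3: "red (pos C * (35 + 10 * length (bin (pos C))) + 13) (apps SPLITt [SPLITt, B2 (pos C), E4 [], E4 (inp C), K0])
     (apps K0 [E4 (rev (take (pos C) (inp C)) @ []), E4 (drop (pos C) (inp C))])"
    by (rule SPLIT_red[OF pl order.refl K0])
  have i4: "red 2 (apps K0 [E4 (rev (take (pos C) (inp C)) @ []), E4 (drop (pos C) (inp C))]) (LSC M C)"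
    by (intro red_hsteps[where m=2]) (simp_all add: K0_def LSC_def LS_def del: enc_str.simps)
  have "red (7 + (pos C * (35 + 10 * length (bin (pos C))) + 13) + 2) (App (enc_config C) (INIT M)) (LSC M C)"
    by (rule red_trans[OF red_trans[OF i2 i3] i4])
  from red_trans[OF i1 red_App[OF this k]]
  show ?thesis by (simp add: add.commute add.left_commute)
qed


lemma len_bin_log: "n \<ge> 1 \<Longrightarrow> real (length (bin n)) \<le> 1 + log 2 (real n)"
proof (induction n rule: less_induct)
  case (less n)
  show ?case
  proof (cases "n = 1")
    case True then show ?thesis by simp
  next
    case False
    then have n2: "n \<ge> 2" using less.prems by simp
    then have h: "n div 2 \<ge> 1" "n div 2 < n" by auto
    have "real (length (bin n)) = 1 + real (length (bin (n div 2)))"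
      using n2 by (simp add: bin_pos)
    also have "\<dots> \<le> 1 + (1 + log 2 (real (n div 2)))" using less.IH[OF h(2) h(1)] by simp
    also have "1 + log 2 (real (n div 2)) = log 2 (2 * real (n div 2))"
      using h(1) by (simp add: log_mult)
    also have "\<dots> \<le> log 2 (real n)"
      using h(1) by (subst log_le_cancel_iff) auto
    finally show ?thesis by simp
  qed
qed

lemma loop_final:
  fixes M :: "'q::{finite,linorder} tm"
  assumes wf: "wf_tm M" and st: "stays_on_input M" and k: "det_value k"
  shows "(tm_step M ^^ n) C D \<Longrightarrow> is_config C \<Longrightarrow> is_final M D \<Longrightarrow>
    red (n * (10 * length (bin (length (inp C))) + card (UNIV :: 'q set) + 82) + card (UNIV :: 'q set) + 18)
      (App (LSC M C) k) (App k (enc_config D))"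
proof (induction n arbitrary: C)
  case 0
  then have "C = D" by simp
  then show ?case using final_sim[OF 0(3) k] by simp
next
  case (Suc n)
  then obtain C' where ts: "tm_step M C C'" and rest: "(tm_step M ^^ n) C' D"
    by (metis relpowp_Suc_D2)
  have ss: "redp (10 * length (bin (pos C)) + card (UNIV :: 'q set) + 82) (LSC M C) (LSC M C')"
    and cf': "is_config C'" and ii: "inp C' = inp C"
    using step_sim[OF wf st Suc.prems(2) ts] by auto
  have "length (bin (pos C)) \<le> length (bin (length (inp C)))"
    using Suc.prems(2) by (intro bin_len_mono) (simp add: is_config_def)
  then have ss': "red (10 * length (bin (length (inp C))) + card (UNIV :: 'q set) + 82) (App (LSC M C) k) (App (LSC M C') k)"
    by (intro red_App[OF red_mono[OF redp_red[OF ss]]] k) simp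
  have ih: "red (n * (10 * length (bin (length (inp C))) + card (UNIV :: 'q set) + 82) + card (UNIV :: 'q set) + 18)
      (App (LSC M C') k) (App k (enc_config D))"
    using Suc.IH[OF rest cf' Suc.prems(3)] ii by simp
  show ?case by (rule red_mono[OF red_trans[OF ss' ih]]) simp
qed

lemma arith_bound:
  fixes L lg LB m n :: real
  assumes L: "L \<ge> 2" and lg: "lg \<ge> 1" and LB: "LB \<le> 1 + lg" "LB \<ge> 0" and m: "m \<ge> 0" and n: "n \<ge> 0"
  shows "L * (35 + 10 * LB) + 24 + (n * (10 * LB + m + 82) + m + 18) \<le> (m + 102) * (n + 1) * L * lg"
proof -
  have "1 * 1 \<le> L * lg" using L lg by (intro mult_mono) auto
  then have C: "1 \<le> L * lg" by simp
  have A: "L * (35 + 10 * LB) \<le> L * (55 * lg)" using L LB lg by (intro mult_left_mono) auto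
  have B1: "10 * LB + m + 82 \<le> (m + 102) * lg"
  proof -
    have "(m + 92) * 1 \<le> (m + 92) * lg" using m lg by (intro mult_left_mono) auto
    then show ?thesis using LB by (simp add: algebra_simps)
  qed
  have "0 \<le> (m + 102) * lg" using m lg by simp
  then have B2: "(m + 102) * lg * 1 \<le> (m + 102) * lg * L" using L by (intro mult_left_mono) auto
  have B: "n * (10 * LB + m + 82) \<le> n * ((m + 102) * lg * L)"
    using B1 B2 n by (intro mult_left_mono) auto
  have D: "(m + 47) * 1 \<le> (m + 47) * (L * lg)" using C m by (intro mult_left_mono) auto
  have "L * (35 + 10 * LB) + 24 + (n * (10 * LB + m + 82) + m + 18)
      \<le> L * (55 * lg) + 24 + n * ((m + 102) * lg * L) + m + 18" using A B by linarith
  also have "\<dots> \<le> (m + 102) * (n + 1) * L * lg" using D by (simp add: algebra_simps)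
  finally show ?thesis .
qed

lemma loop_div:
  fixes M :: "'q::{finite,linorder} tm"
  assumes wf: "wf_tm M" and st: "stays_on_input M" and k: "det_value k" and cf: "is_config C"
    and nr: "\<nexists>n D. (tm_step M ^^ n) C D \<and> is_final M D"
  shows "diverges (App (LSC M C) k)"
proof -
  define P where "P t = (\<exists>C' j. (tm_step M ^^ j) C C' \<and> is_config C' \<and> t = App (LSC M C') k)" for t
  have P0: "P (App (LSC M C) k)" unfolding P_def using cf by (intro exI[of _ C] exI[of _ 0]) simp
  have "diverges t \<or> (\<exists>t' j. P t' \<and> (det_step ^^ Suc j) t t')" if "P t" for t
  proof -
    obtain C' j where r: "(tm_step M ^^ j) C C'" and cf': "is_config C'" and t: "t = App (LSC M C') k"
      using \<open>P t\<close> unfolding P_def by blast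
    have nf: "\<not> is_final M C'" using nr r by blast
    have pl: "pos C' < length (inp C')" using cf' by (simp add: is_config_def)
    show ?thesis
    proof (cases "delta M (inp C' ! pos C') (cur C') (state C')")
      case None
      then show ?thesis using stuck_div[OF cf' nf None k] t by blast
    next
      case (Some x)
      then obtain d a' mu s' where dl: "delta M (inp C' ! pos C') (cur C') (state C') = Some (d, a', mu, s')"
        by (cases x) auto
      obtain wl a wr where mw: "move_work mu (wleft C') a' (wright C') = (wl, a, wr)"
        by (cases "move_work mu (wleft C') a' (wright C')") auto
      have vi: "valid_input (inp C')" using cf' by (simp add: is_config_def)
      have nn: "0 \<le> int (pos C') + d" using st vi pl dl unfolding stays_on_input_def by blast
      let ?D = "\<lparr>inp = inp C', pos = nat (int (pos C') + d), wleft = wl, cur = a, wright = wr, state = s'\<rparr>"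
      have ts: "tm_step M C' ?D" by (rule tm_step.intros[OF nf pl dl nn mw])
      have ss: "redp (10 * length (bin (pos C')) + card (UNIV :: 'q set) + 82) (LSC M C') (LSC M ?D)"
        and cfD: "is_config ?D" using step_sim[OF wf st cf' ts] by auto
      obtain mm where mm: "0 < mm" "(det_step ^^ mm) (LSC M C') (LSC M ?D)" using ss unfolding redp_def by blast
      then obtain j' where j': "mm = Suc j'" by (cases mm) auto
      have "(det_step ^^ Suc j') t (App (LSC M ?D) k)" using steps_ctx[OF mm(2) k] j' t by simp
      moreover have "P (App (LSC M ?D) k)" unfolding P_def
        using r ts cfD by (intro exI[of _ ?D] exI[of _ "Suc j"]) (auto intro: relpowp_Suc_I)
      ultimately show ?thesis by blast
    qed
  qed
  then show ?thesis using diverges_loop[of P, OF P0] by blast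
qed

theorem mainTheorem9:
  fixes M :: "'q::{finite,linorder} tm"
  assumes "wf_tm M"
    and "stays_on_input M"
  shows "\<exists>trans (c::real). closed trans \<and> det_term trans \<and>
    (\<forall>k C. det_value k \<longrightarrow> is_config C \<longrightarrow>
      (\<forall>n D. (tm_step M ^^ n) C D \<longrightarrow> is_final M D \<longrightarrow>
         (\<exists>m. det_steps m (App (App trans k) (enc_config C)) (App k (enc_config D)) \<and>
              real m \<le> c * (real n + 1) * real (length (inp C)) * log 2 (real (length (inp C)))))
      \<and> ((\<nexists>n D. (tm_step M ^^ n) C D \<and> is_final M D) \<longrightarrow>
         diverges (App (App trans k) (enc_config C))))"
proof (intro exI[of _ "TRANS M"] exI[of _ "real (card (UNIV :: 'q set)) + 102"] conjI allI impI)
  show "closed (TRANS M)" by (simp add: closed_def)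
  show "det_term (TRANS M)" by simp
next
  fix k C n D
  assume k: "det_value k" and cf: "is_config C" and r: "(tm_step M ^^ n) C D" and fin: "is_final M D"
  define Lq where "Lq = card (UNIV :: 'q set)"
  define L where "L = length (inp C)"
  define LB where "LB = length (bin L)"
  define p where "p = pos C"
  have L2: "2 \<le> L" using cf by (simp add: is_config_def L_def valid_input_len)
  have pL: "p < L" using cf by (simp add: is_config_def L_def p_def)
  have i: "red (p * (35 + 10 * length (bin p)) + 24) (App (App (TRANS M) k) (enc_config C)) (App (LSC M C) k)"
    using init_sim[OF cf k] by (simp add: p_def)
  have l: "red (n * (10 * LB + Lq + 82) + Lq + 18) (App (LSC M C) k) (App k (enc_config D))"
    using loop_final[OF assms k r cf fin] by (simp add: LB_def L_def Lq_def)
  have "p * (35 + 10 * length (bin p)) \<le> L * (35 + 10 * LB)"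
    using pL bin_len_mono[of p L] by (intro mult_mono) (auto simp: LB_def)
  then have "red (L * (35 + 10 * LB) + 24 + (n * (10 * LB + Lq + 82) + Lq + 18))
       (App (App (TRANS M) k) (enc_config C)) (App k (enc_config D))"
    by (intro red_mono[OF red_trans[OF i l]]) simp
  then obtain m where m: "m \<le> L * (35 + 10 * LB) + 24 + (n * (10 * LB + Lq + 82) + Lq + 18)"
    and st: "(det_step ^^ m) (App (App (TRANS M) k) (enc_config C)) (App k (enc_config D))"
    unfolding red_def by blast
  have lg: "1 \<le> log 2 (real L)" using L2 by simp
  have LBr: "real LB \<le> 1 + log 2 (real L)" using len_bin_log[of L] L2 by (simp add: LB_def)
  have "real m \<le> real (L * (35 + 10 * LB) + 24 + (n * (10 * LB + Lq + 82) + Lq + 18))"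
    using m by (rule of_nat_mono)
  also have "\<dots> = real L * (35 + 10 * real LB) + 24 + (real n * (10 * real LB + real Lq + 82) + real Lq + 18)"
    by simp
  also have "\<dots> \<le> (real Lq + 102) * (real n + 1) * real L * log 2 (real L)"
    by (rule arith_bound) (use L2 lg LBr in auto)
  finally show "\<exists>m. det_steps m (App (App (TRANS M) k) (enc_config C)) (App k (enc_config D)) \<and>
      real m \<le> (real (card (UNIV :: 'q set)) + 102) * (real n + 1) * real (length (inp C)) * log 2 (real (length (inp C)))"
    using st by (auto simp: det_steps_def Lq_def L_def)
next
  fix k C
  assume k: "det_value k" and cf: "is_config C" and nr: "\<nexists>n D. (tm_step M ^^ n) C D \<and> is_final M D"
  obtain m where "(det_step ^^ m) (App (App (TRANS M) k) (enc_config C)) (App (LSC M C) k)"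
    using init_sim[OF cf k] unfolding red_def by blast
  then show "diverges (App (App (TRANS M) k) (enc_config C))"
    using loop_div[OF assms k cf nr] by (rule diverges_prefix)
qed


end
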